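(* Let $d\ge2$, let $\Omega\subset\mathbb{R}^d$ be compact, let $X_1,X_2,\ldots$ be i.i.d. in $\Omega$ with density $\varphi_P$, and $Y_1,Y_2,\ldots$ i.i.d. in $\Omega$ with density $\varphi_D$, all independent. Let $L^*(n)$ be the length of the optimal stacker crane tour through the pairs $(X_i,Y_i)$, $i=1,\ldots,n$. Then $$\liminf_{n\to\infty}\frac{L^*(n)}{n}\ge \mathbb{E}_{\varphi_P\varphi_D}\|Y-X\|+W(\varphi_D,\varphi_P)\quad\text{almost surely},$$ where $X$ and $Y$ are independent with densities $\varphi_P$ and $\varphi_D$ respectively.
   Context: Given pickup/delivery pairs $(x_i,y_i)$, a stacker crane tour is a closed tour through all $x_i,y_i$ in which each pickup $x_i$ is immediately followed by its delivery $y_i$; its length is the sum of Euclidean distances along the tour. The Euclidean Wasserstein distance is $W(\varphi_1,\varphi_2)=\inf_{\gamma\in\Gamma(\varphi_1,\varphi_2)}\int_{\Omega\times\Omega}\|y-x\|\,d\gamma(x,y)$, with $\Gamma(\varphi_1,\varphi_2)$ the set of measures on $\Omega\times\Omega$ with marginal densities $\varphi_1,\varphi_2$. The densities are densities of absolutely continuous distributions. *)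

theory Defs
  imports "HOL-Probability.Probability" "HOL-Combinatorics.Permutations"
begin

definition sc_tour_length ::
  "(nat \<Rightarrow> 'a::euclidean_space) \<Rightarrow> (nat \<Rightarrow> 'a) \<Rightarrow> nat \<Rightarrow> (nat \<Rightarrow> nat) \<Rightarrow> real" where
  "sc_tour_length x y n \<sigma> =
     (\<Sum>k<n. dist (x (\<sigma> k)) (y (\<sigma> k)) + dist (y (\<sigma> k)) (x (\<sigma> ((k + 1) mod n))))"

definition sc_opt :: "(nat \<Rightarrow> 'a::euclidean_space) \<Rightarrow> (nat \<Rightarrow> 'a) \<Rightarrow> nat \<Rightarrow> real" where
  "sc_opt x y n = Min (sc_tour_length x y n ` {\<sigma>. \<sigma> permutes {..<n}})"

definition couplings :: "'a::euclidean_space set \<Rightarrow> 'a measure \<Rightarrow> 'a measure \<Rightarrow> ('a \<times> 'a) measure set" where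
  "couplings \<Omega> \<mu> \<nu> = {\<gamma>. sets \<gamma> = sets (borel \<Otimes>\<^sub>M borel) \<and>
       emeasure \<gamma> (UNIV - \<Omega> \<times> \<Omega>) = 0 \<and>
       distr \<gamma> borel fst = \<mu> \<and> distr \<gamma> borel snd = \<nu>}"

definition wasserstein :: "'a::euclidean_space set \<Rightarrow> ('a \<Rightarrow> real) \<Rightarrow> ('a \<Rightarrow> real) \<Rightarrow> real" where
  "wasserstein \<Omega> \<phi>1 \<phi>2 =
     (INF \<gamma> \<in> couplings \<Omega> (density lborel (\<lambda>x. ennreal (\<phi>1 x))) (density lborel (\<lambda>x. ennreal (\<phi>2 x))).
        \<integral>z. norm (snd z - fst z) \<partial>\<gamma>)"

end

theory Submission
  imports Defs
begin

lemma transport_perturb: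
  fixes Q :: "nat \<Rightarrow> nat \<Rightarrow> real" and a b :: "nat \<Rightarrow> real"
  assumes Q0: "\<And>j k. Q j k \<ge> 0" and a0: "\<And>j. a j \<ge> 0" and b0: "\<And>k. b k \<ge> 0"
    and sa: "(\<Sum>j<m. a j) = 1" and sb: "(\<Sum>k<m. b k) = 1"
    and sQ: "(\<Sum>j<m. \<Sum>k<m. Q j k) = 1"
  shows "\<exists>P. (\<forall>j k. P j k \<ge> 0) \<and> (\<forall>j<m. (\<Sum>k<m. P j k) = a j) \<and> (\<forall>k<m. (\<Sum>j<m. P j k) = b k) \<and>
     (\<Sum>j<m. \<Sum>k<m. \<bar>P j k - Q j k\<bar>) \<le>
        2 * ((\<Sum>j<m. \<bar>(\<Sum>k<m. Q j k) - a j\<bar>) + (\<Sum>k<m. \<bar>(\<Sum>j<m. Q j k) - b k\<bar>))"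
proof -
  define \<alpha> where "\<alpha> j = (\<Sum>k<m. Q j k)" for j
  define \<beta> where "\<beta> k = (\<Sum>j<m. Q j k)" for k
  define s where "s j = min 1 (a j / \<alpha> j)" for j
  define t where "t k = min 1 (b k / \<beta> k)" for k
  define Q' where "Q' j k = Q j k * s j * t k" for j k
  have \<alpha>0: "\<alpha> j \<ge> 0" for j unfolding \<alpha>_def by (intro sum_nonneg Q0)
  have \<beta>0: "\<beta> k \<ge> 0" for k unfolding \<beta>_def by (intro sum_nonneg Q0)
  have s01: "0 \<le> s j" "s j \<le> 1" for j using a0 \<alpha>0 unfolding s_def by auto
  have t01: "0 \<le> t k" "t k \<le> 1" for k using b0 \<beta>0 unfolding t_def by auto
  have Q'0: "Q' j k \<ge> 0" for j k unfolding Q'_def using Q0 s01 t01 by simp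
  have Q'le: "Q' j k \<le> Q j k" for j k
  proof -
    have "s j * t k \<le> 1" using s01 t01 by (simp add: mult_le_one)
    then show ?thesis unfolding Q'_def using Q0[of j k] by (metis mult.assoc mult_left_le)
  qed
  have sa_le: "s j * \<alpha> j \<le> a j" for j
  proof (cases "\<alpha> j = 0")
    case True then show ?thesis using a0 by simp
  next
    case False then have "\<alpha> j > 0" using \<alpha>0 by (simp add: less_le)
    then have "s j * \<alpha> j \<le> (a j / \<alpha> j) * \<alpha> j" unfolding s_def by (intro mult_right_mono) auto
    then show ?thesis using \<open>\<alpha> j > 0\<close> by simp
  qed
  have tb_le: "t k * \<beta> k \<le> b k" for k
  proof (cases "\<beta> k = 0")
    case True then show ?thesis using b0 by simp
  next
    case False then have "\<beta> k > 0" using \<beta>0 by (simp add: less_le)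
    then have "t k * \<beta> k \<le> (b k / \<beta> k) * \<beta> k" unfolding t_def by (intro mult_right_mono) auto
    then show ?thesis using \<open>\<beta> k > 0\<close> by simp
  qed
  have sa_err: "\<alpha> j * (1 - s j) \<le> \<bar>\<alpha> j - a j\<bar>" for j
  proof (cases "\<alpha> j = 0")
    case True then show ?thesis by simp
  next
    case False then have p: "\<alpha> j > 0" using \<alpha>0 by (simp add: less_le)
    show ?thesis
    proof (cases "a j \<le> \<alpha> j")
      case True
      then have "s j = a j / \<alpha> j" unfolding s_def using p by (simp add: divide_le_eq_1)
      then show ?thesis using p True by (simp add: algebra_simps)
    next
      case False
      then have "s j = 1" unfolding s_def using p by (simp add: min_def divide_le_eq_1)
      then show ?thesis by simp
    qed
  qed
  have tb_err: "\<beta> k * (1 - t k) \<le> \<bar>\<beta> k - b k\<bar>" for k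
  proof (cases "\<beta> k = 0")
    case True then show ?thesis by simp
  next
    case False then have p: "\<beta> k > 0" using \<beta>0 by (simp add: less_le)
    show ?thesis
    proof (cases "b k \<le> \<beta> k")
      case True
      then have "t k = b k / \<beta> k" unfolding t_def using p by (simp add: divide_le_eq_1)
      then show ?thesis using p True by (simp add: algebra_simps)
    next
      case False
      then have "t k = 1" unfolding t_def using p by (simp add: min_def divide_le_eq_1)
      then show ?thesis by simp
    qed
  qed
  define r where "r j = a j - (\<Sum>k<m. Q' j k)" for j
  define c where "c k = b k - (\<Sum>j<m. Q' j k)" for k
  define D where "D = 1 - (\<Sum>j<m. \<Sum>k<m. Q' j k)"
  have r0: "r j \<ge> 0" for j
  proof -
    have "(\<Sum>k<m. Q' j k) = s j * (\<Sum>k<m. Q j k * t k)" unfolding Q'_def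
      by (simp add: sum_distrib_left mult_ac)
    also have "\<dots> \<le> s j * \<alpha> j" unfolding \<alpha>_def using s01 t01 Q0
      by (intro mult_left_mono sum_mono) (auto simp: mult_left_le)
    finally show ?thesis unfolding r_def using sa_le[of j] by simp
  qed
  have c0: "c k \<ge> 0" for k
  proof -
    have "(\<Sum>j<m. Q' j k) = t k * (\<Sum>j<m. Q j k * s j)" unfolding Q'_def
      by (simp add: sum_distrib_left mult_ac)
    also have "\<dots> \<le> t k * \<beta> k" unfolding \<beta>_def using s01 t01 Q0
      by (intro mult_left_mono sum_mono) (auto simp: mult_left_le)
    finally show ?thesis unfolding c_def using tb_le[of k] by simp
  qed
  have sr: "(\<Sum>j<m. r j) = D" unfolding r_def D_def using sa by (simp add: sum_subtractf)
  have sc: "(\<Sum>k<m. c k) = D"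
  proof -
    have "(\<Sum>k<m. \<Sum>j<m. Q' j k) = (\<Sum>j<m. \<Sum>k<m. Q' j k)" by (rule sum.swap)
    then show ?thesis unfolding c_def D_def using sb by (simp add: sum_subtractf)
  qed
  have D0: "D \<ge> 0" using sr r0 by (metis sum_nonneg)
  define P where "P j k = Q' j k + r j * c k / D" for j k
  have P0: "\<forall>j k. P j k \<ge> 0" unfolding P_def using Q'0 r0 c0 D0 by (simp add: add_nonneg_nonneg)
  have rD: "r j * D / D = r j" if "j < m" for j
  proof (cases "D = 0")
    case True
    then have "\<forall>j\<in>{..<m}. r j = 0" using sr r0 by (subst sum_nonneg_eq_0_iff[symmetric]) auto
    then show ?thesis using that by simp
  qed simp
  have cD: "c k * D / D = c k" if "k < m" for k
  proof (cases "D = 0")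
    case True
    then have "\<forall>k\<in>{..<m}. c k = 0" using sc c0 by (subst sum_nonneg_eq_0_iff[symmetric]) auto
    then show ?thesis using that by simp
  qed simp
  have rows: "\<forall>j<m. (\<Sum>k<m. P j k) = a j"
  proof (intro allI impI)
    fix j assume j: "j < m"
    have "(\<Sum>k<m. P j k) = (\<Sum>k<m. Q' j k) + r j * (\<Sum>k<m. c k) / D"
      unfolding P_def by (simp add: sum.distrib sum_distrib_left sum_divide_distrib)
    also have "\<dots> = a j" using rD[OF j] sc unfolding r_def by simp
    finally show "(\<Sum>k<m. P j k) = a j" .
  qed
  have cols: "\<forall>k<m. (\<Sum>j<m. P j k) = b k"
  proof (intro allI impI)
    fix k assume k: "k < m"
    have "(\<Sum>j<m. P j k) = (\<Sum>j<m. Q' j k) + c k * (\<Sum>j<m. r j) / D"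
      unfolding P_def by (simp add: sum.distrib sum_distrib_left sum_divide_distrib sum_distrib_right mult.commute)
    also have "\<dots> = b k" using cD[OF k] sr unfolding c_def by simp
    finally show "(\<Sum>j<m. P j k) = b k" .
  qed
  have err1: "\<bar>P j k - Q j k\<bar> \<le> (Q j k - Q' j k) + r j * c k / D" for j k
    unfolding P_def using Q'le[of j k] r0[of j] c0[of k] D0 by (simp add: abs_le_iff)
  have "(\<Sum>j<m. \<Sum>k<m. \<bar>P j k - Q j k\<bar>) \<le> (\<Sum>j<m. \<Sum>k<m. (Q j k - Q' j k) + r j * c k / D)"
    by (intro sum_mono err1)
  also have "\<dots> = (1 - (\<Sum>j<m. \<Sum>k<m. Q' j k)) + (\<Sum>j<m. r j) * (\<Sum>k<m. c k) / D"
  proof -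
    have "(\<Sum>j<m. \<Sum>k<m. r j * c k / D) = (\<Sum>j<m. r j) * (\<Sum>k<m. c k) / D"
      by (simp add: sum_product sum_divide_distrib)
    then show ?thesis using sQ by (simp add: sum.distrib sum_subtractf)
  qed
  also have "\<dots> = D + D * D / D" using sr sc D_def by simp
  also have "\<dots> \<le> 2 * D" by (cases "D = 0") auto
  also have "D \<le> (\<Sum>j<m. \<bar>\<alpha> j - a j\<bar>) + (\<Sum>k<m. \<bar>\<beta> k - b k\<bar>)"
  proof -
    have "D = (\<Sum>j<m. \<Sum>k<m. Q j k - Q' j k)" unfolding D_def using sQ by (simp add: sum_subtractf)
    also have "\<dots> \<le> (\<Sum>j<m. \<Sum>k<m. Q j k * (1 - s j) + Q j k * (1 - t k))"
    proof (intro sum_mono)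
      fix j k
      have "1 - s j * t k \<le> (1 - s j) + (1 - t k)"
        using mult_nonneg_nonneg[of "1 - s j" "1 - t k"] s01 t01 by (simp add: algebra_simps)
      then have "Q j k * (1 - s j * t k) \<le> Q j k * ((1 - s j) + (1 - t k))"
        using Q0 by (intro mult_left_mono) auto
      then show "Q j k - Q' j k \<le> Q j k * (1 - s j) + Q j k * (1 - t k)"
        unfolding Q'_def by (simp add: algebra_simps)
    qed
    also have "\<dots> = (\<Sum>j<m. \<alpha> j * (1 - s j)) + (\<Sum>k<m. \<beta> k * (1 - t k))"
    proof -
      have "(\<Sum>j<m. \<Sum>k<m. Q j k * (1 - t k)) = (\<Sum>k<m. \<Sum>j<m. Q j k * (1 - t k))" by (rule sum.swap)
      then show ?thesis unfolding \<alpha>_def \<beta>_def by (simp add: sum.distrib sum_distrib_right)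
    qed
    also have "\<dots> \<le> (\<Sum>j<m. \<bar>\<alpha> j - a j\<bar>) + (\<Sum>k<m. \<bar>\<beta> k - b k\<bar>)"
      by (intro add_mono sum_mono sa_err tb_err)
    finally show ?thesis .
  qed
  then have "2 * D \<le> 2 * ((\<Sum>j<m. \<bar>\<alpha> j - a j\<bar>) + (\<Sum>k<m. \<bar>\<beta> k - b k\<bar>))" by simp
  finally show ?thesis using P0 rows cols unfolding \<alpha>_def \<beta>_def by blast
qed


lemma rot_bij: "(n::nat) > 0 \<Longrightarrow> bij_betw (\<lambda>t. (t + 1) mod n) {..<n} {..<n}"
proof -
  assume n: "n > 0"
  have inj: "inj_on (\<lambda>t::nat. (t + 1) mod n) {..<n}"
  proof (rule inj_onI)
    fix a b assume a: "a \<in> {..<n}" and b: "b \<in> {..<n}" and e: "(a + 1) mod n = (b + 1) mod n"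
    have h: "(t + 1) mod n = (if t + 1 = n then 0 else t + 1)" if "t < n" for t :: nat
    proof (cases "t + 1 = n")
      case False then have "t + 1 < n" using that by (metis Suc_eq_plus1 Suc_lessI)
      then show ?thesis using False by simp
    qed simp
    show "a = b" using e h[of a] h[of b] a b by (auto split: if_splits)
  qed
  have "(\<lambda>t. (t + 1) mod n) ` {..<n} \<subseteq> {..<n}" using n by auto
  with inj show ?thesis by (simp add: bij_betw_def endo_inj_surj)
qed

lemma perm_rot_bij:
  fixes n :: nat
  assumes "\<sigma> permutes {..<n}" "n > 0"
  shows "bij_betw (\<lambda>t. \<sigma> ((t + 1) mod n)) {..<n} {..<n}"
proof -
  have "bij_betw \<sigma> {..<n} {..<n}" using assms(1) by (rule permutes_imp_bij)
  then have "bij_betw (\<sigma> \<circ> (\<lambda>t. (t + 1) mod n)) {..<n} {..<n}"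
    using rot_bij[OF assms(2)] by (intro bij_betw_trans)
  then show ?thesis by (simp add: o_def)
qed

lemma scale_sum3: "(N::real) > 0 \<Longrightarrow> N * (\<Sum>j<m. \<Sum>k<m. ((\<Sum>t<n. F j k t) / N) * l j k) = (\<Sum>j<m. \<Sum>k<m. \<Sum>t<n. F j k t * l j k)"
proof -
  assume N: "N > 0"
  have e: "N * ((\<Sum>t<n. G t) / N * r) = (\<Sum>t<n. G t * r)" for G r
    using N by (simp add: sum_distrib_right)
  show ?thesis by (simp only: sum_distrib_left e)
qed

lemma swap_l: "(\<Sum>k<m. (\<Sum>t<n. a t * b t k) / (N::real)) = (\<Sum>t<n. a t * (\<Sum>k<m. b t k)) / N"
proof -
  have "(\<Sum>k<m. \<Sum>t<n. a t * b t k) = (\<Sum>t<n. \<Sum>k<m. a t * b t k)" by (rule sum.swap)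
  then show ?thesis by (simp add: sum_divide_distrib[symmetric] sum_distrib_left)
qed

lemma swap_r: "(\<Sum>k<m. (\<Sum>t<n. b t k * a t) / (N::real)) = (\<Sum>t<n. (\<Sum>k<m. b t k) * a t) / N"
proof -
  have "(\<Sum>k<m. \<Sum>t<n. b t k * a t) = (\<Sum>t<n. \<Sum>k<m. b t k * a t)" by (rule sum.swap)
  then show ?thesis by (simp add: sum_divide_distrib[symmetric] sum_distrib_right)
qed

locale cells =
  fixes \<Omega> :: "'d::euclidean_space set" and A :: "nat \<Rightarrow> 'd set" and m :: nat
    and c :: "nat \<Rightarrow> 'd" and \<delta> :: real
  assumes disj: "\<And>j k. j \<noteq> k \<Longrightarrow> A j \<inter> A k = {}"
    and cover: "\<Omega> \<subseteq> (\<Union>j<m. A j)"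
    and sub: "\<And>j. A j \<subseteq> \<Omega>"
    and close: "\<And>j x. x \<in> A j \<Longrightarrow> dist x (c j) < \<delta>"
begin

lemma ind_sum1: "x \<in> \<Omega> \<Longrightarrow> (\<Sum>j<m. indicator (A j) x) = (1::real)"
proof -
  assume x: "x \<in> \<Omega>"
  then obtain j0 where j0: "j0 < m" "x \<in> A j0" using cover by auto
  have "(\<Sum>j<m. indicator (A j) x) = (\<Sum>j\<in>{j0}. (indicator (A j) x :: real))"
  proof (rule sum.mono_neutral_right)
    show "\<forall>i\<in>{..<m} - {j0}. (indicator (A i) x :: real) = 0"
      using disj j0 by (auto simp: indicator_def)
  qed (use j0 in auto)
  then show ?thesis using j0 by simp
qed

lemma dist_lb:
  assumes "x \<in> A j" "y \<in> A k"
  shows "dist (c j) (c k) - 2 * \<delta> \<le> dist x y"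
proof -
  have "dist (c j) (c k) \<le> dist (c j) x + dist x y + dist y (c k)"
    using dist_triangle[of "c j" "c k" x] dist_triangle[of x "c k" y] by linarith
  then show ?thesis using close[OF assms(1)] close[OF assms(2)] by (simp add: dist_commute)
qed

lemma dist_ub:
  assumes "x \<in> A j" "y \<in> A k"
  shows "dist x y \<le> dist (c j) (c k) + 2 * \<delta>"
proof -
  have "dist x y \<le> dist x (c j) + dist (c j) (c k) + dist (c k) y"
    using dist_triangle[of x y "c j"] dist_triangle[of "c j" y "c k"] by linarith
  then show ?thesis using close[OF assms(1)] close[OF assms(2)] by (simp add: dist_commute)
qed

lemma pair_lb:
  assumes x: "x \<in> \<Omega>" and y: "y \<in> \<Omega>"
  shows "(\<Sum>j<m. \<Sum>k<m. indicator (A j) y * indicator (A k) x * (dist (c j) (c k) - 2 * \<delta>))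
          \<le> dist y x"
proof -
  have "(\<Sum>j<m. \<Sum>k<m. indicator (A j) y * indicator (A k) x * (dist (c j) (c k) - 2 * \<delta>))
     \<le> (\<Sum>j<m. \<Sum>k<m. indicator (A j) y * indicator (A k) x * dist y x)"
    by (intro sum_mono) (auto simp: indicator_def intro: dist_lb)
  also have "\<dots> = (\<Sum>j<m. indicator (A j) y) * (\<Sum>k<m. indicator (A k) x) * dist y x"
    by (subst sum_product) (simp only: sum_distrib_right)
  also have "\<dots> = dist y x" using ind_sum1[OF x] ind_sum1[OF y] by simp
  finally show ?thesis .
qed

definition Qm :: "(nat \<Rightarrow> 'd) \<Rightarrow> (nat \<Rightarrow> 'd) \<Rightarrow> nat \<Rightarrow> (nat \<Rightarrow> nat) \<Rightarrow> nat \<Rightarrow> nat \<Rightarrow> real" where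
  "Qm x y n \<sigma> j k = (\<Sum>t<n. indicator (A j) (y (\<sigma> t)) * indicator (A k) (x (\<sigma> ((t + 1) mod n)))) / n"

lemma tour_lb:
  assumes n: "n > 0" and \<sigma>: "\<sigma> permutes {..<n}"
    and x: "\<And>i. x i \<in> \<Omega>" and y: "\<And>i. y i \<in> \<Omega>"
  shows "(\<Sum>i<n. dist (x i) (y i)) + n * (\<Sum>j<m. \<Sum>k<m. Qm x y n \<sigma> j k * (dist (c j) (c k) - 2 * \<delta>))
         \<le> sc_tour_length x y n \<sigma>"
proof -
  have b\<sigma>: "bij_betw \<sigma> {..<n} {..<n}" using \<sigma> by (rule permutes_imp_bij)
  have s1: "(\<Sum>t<n. dist (x (\<sigma> t)) (y (\<sigma> t))) = (\<Sum>i<n. dist (x i) (y i))"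
    using sum.reindex_bij_betw[OF b\<sigma>, of "\<lambda>i. dist (x i) (y i)"] .
  have "n * (\<Sum>j<m. \<Sum>k<m. Qm x y n \<sigma> j k * (dist (c j) (c k) - 2 * \<delta>))
      = (\<Sum>j<m. \<Sum>k<m. \<Sum>t<n. indicator (A j) (y (\<sigma> t)) * indicator (A k) (x (\<sigma> ((t + 1) mod n))) * (dist (c j) (c k) - 2 * \<delta>))"
    using n unfolding Qm_def by (intro scale_sum3) simp
  also have "\<dots> = (\<Sum>t<n. \<Sum>j<m. \<Sum>k<m. indicator (A j) (y (\<sigma> t)) * indicator (A k) (x (\<sigma> ((t + 1) mod n))) * (dist (c j) (c k) - 2 * \<delta>))"
  proof -
    have "(\<Sum>j<m. \<Sum>k<m. \<Sum>t<n. indicator (A j) (y (\<sigma> t)) * indicator (A k) (x (\<sigma> ((t + 1) mod n))) * (dist (c j) (c k) - 2 * \<delta>))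
      = (\<Sum>j<m. \<Sum>t<n. \<Sum>k<m. indicator (A j) (y (\<sigma> t)) * indicator (A k) (x (\<sigma> ((t + 1) mod n))) * (dist (c j) (c k) - 2 * \<delta>))"
      by (intro sum.cong refl sum.swap)
    also have "\<dots> = (\<Sum>t<n. \<Sum>j<m. \<Sum>k<m. indicator (A j) (y (\<sigma> t)) * indicator (A k) (x (\<sigma> ((t + 1) mod n))) * (dist (c j) (c k) - 2 * \<delta>))" by (rule sum.swap)
    finally show ?thesis .
  qed
  also have "\<dots> \<le> (\<Sum>t<n. dist (y (\<sigma> t)) (x (\<sigma> ((t + 1) mod n))))"
    by (intro sum_mono pair_lb x y)
  finally show ?thesis unfolding sc_tour_length_def sum.distrib s1 by simp
qed

lemma Qm_rows:
  assumes n: "n > 0" and \<sigma>: "\<sigma> permutes {..<n}" and x: "\<And>i. x i \<in> \<Omega>"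
  shows "(\<Sum>k<m. Qm x y n \<sigma> j k) = (\<Sum>i<n. indicator (A j) (y i)) / n"
proof -
  have "(\<Sum>k<m. Qm x y n \<sigma> j k) = (\<Sum>t<n. indicator (A j) (y (\<sigma> t)) * (\<Sum>k<m. indicator (A k) (x (\<sigma> ((t + 1) mod n))))) / n"
    unfolding Qm_def by (rule swap_l)
  also have "\<dots> = (\<Sum>t<n. indicator (A j) (y (\<sigma> t))) / n" using ind_sum1 x by simp
  also have "(\<Sum>t<n. indicator (A j) (y (\<sigma> t))) = (\<Sum>i<n. indicator (A j) (y i) :: real)"
    using sum.reindex_bij_betw[OF permutes_imp_bij[OF \<sigma>], of "\<lambda>i. indicator (A j) (y i)"] .
  finally show ?thesis .
qed

lemma Qm_cols:
  assumes n: "n > 0" and \<sigma>: "\<sigma> permutes {..<n}" and y: "\<And>i. y i \<in> \<Omega>"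
  shows "(\<Sum>j<m. Qm x y n \<sigma> j k) = (\<Sum>i<n. indicator (A k) (x i)) / n"
proof -
  have "(\<Sum>j<m. Qm x y n \<sigma> j k) = (\<Sum>t<n. (\<Sum>j<m. indicator (A j) (y (\<sigma> t))) * indicator (A k) (x (\<sigma> ((t + 1) mod n)))) / n"
    unfolding Qm_def by (rule swap_r)
  also have "\<dots> = (\<Sum>t<n. indicator (A k) (x (\<sigma> ((t + 1) mod n)))) / n" using ind_sum1 y by simp
  also have "(\<Sum>t<n. indicator (A k) (x (\<sigma> ((t + 1) mod n)))) = (\<Sum>i<n. indicator (A k) (x i) :: real)"
    using sum.reindex_bij_betw[OF perm_rot_bij[OF \<sigma> n], of "\<lambda>i. indicator (A k) (x i)"] .
  finally show ?thesis .
qed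

lemma Qm_nonneg: "Qm x y n \<sigma> j k \<ge> 0"
  unfolding Qm_def by (intro divide_nonneg_nonneg sum_nonneg) auto

lemma Qm_total:
  assumes n: "n > 0" and \<sigma>: "\<sigma> permutes {..<n}" and x: "\<And>i. x i \<in> \<Omega>" and y: "\<And>i. y i \<in> \<Omega>"
  shows "(\<Sum>j<m. \<Sum>k<m. Qm x y n \<sigma> j k) = 1"
proof -
  have "(\<Sum>j<m. \<Sum>k<m. Qm x y n \<sigma> j k) = (\<Sum>j<m. (\<Sum>i<n. indicator (A j) (y i)) / n)"
    using Qm_rows[OF n \<sigma> x] by simp
  also have "\<dots> = (\<Sum>i<n. \<Sum>j<m. indicator (A j) (y i)) / n"
  proof -
    have "(\<Sum>j<m. \<Sum>i<n. indicator (A j) (y i)) = (\<Sum>i<n. \<Sum>j<m. indicator (A j) (y i) :: real)" by (rule sum.swap)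
    then show ?thesis by (simp add: sum_divide_distrib[symmetric])
  qed
  also have "\<dots> = 1" using ind_sum1 y n by simp
  finally show ?thesis .
qed

end

locale stacker = prob_space M for M :: "'m measure" +
  fixes \<Omega> :: "'d::euclidean_space set" and X Y :: "nat \<Rightarrow> 'm \<Rightarrow> 'd" and \<phi>P \<phi>D :: "'d \<Rightarrow> real"
  assumes cpt: "compact \<Omega>"
    and P0: "\<And>x. 0 \<le> \<phi>P x" and D0: "\<And>x. 0 \<le> \<phi>D x"
    and distX: "\<And>i. distributed M lborel (X i) (\<lambda>x. ennreal (\<phi>P x))"
    and distY: "\<And>i. distributed M lborel (Y i) (\<lambda>x. ennreal (\<phi>D x))"
    and XO: "\<And>i \<omega>. \<omega> \<in> space M \<Longrightarrow> X i \<omega> \<in> \<Omega>"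
    and YO: "\<And>i \<omega>. \<omega> \<in> space M \<Longrightarrow> Y i \<omega> \<in> \<Omega>"
    and ind: "indep_vars (\<lambda>_. borel) (\<lambda>j. case j of Inl i \<Rightarrow> X i | Inr i \<Rightarrow> Y i) UNIV"
begin

definition "muP = density lborel (\<lambda>x. ennreal (\<phi>P x))"
definition "muD = density lborel (\<lambda>x. ennreal (\<phi>D x))"

lemma X_meas[measurable]: "X i \<in> borel_measurable M"
  using distributed_measurable[OF distX[of i]] by (simp add: measurable_cong_sets[OF refl sets_lborel])
lemma Y_meas[measurable]: "Y i \<in> borel_measurable M"
  using distributed_measurable[OF distY[of i]] by (simp add: measurable_cong_sets[OF refl sets_lborel])

lemma distr_X: "distr M borel (X i) = muP"
proof -
  have "distr M borel (X i) = distr M lborel (X i)" by (rule distr_cong) (simp_all add: sets_lborel)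
  also have "\<dots> = muP" unfolding muP_def by (rule distributed_distr_eq_density[OF distX])
  finally show ?thesis .
qed
lemma distr_Y: "distr M borel (Y i) = muD"
proof -
  have "distr M borel (Y i) = distr M lborel (Y i)" by (rule distr_cong) (simp_all add: sets_lborel)
  also have "\<dots> = muD" unfolding muD_def by (rule distributed_distr_eq_density[OF distY])
  finally show ?thesis .
qed

lemma prob_muP: "prob_space muP" using prob_space_distr[OF X_meas[of 0]] distr_X by simp
lemma prob_muD: "prob_space muD" using prob_space_distr[OF Y_meas[of 0]] distr_Y by simp
lemma sets_muP[simp, measurable_cong]: "sets muP = sets borel" unfolding muP_def by simp
lemma sets_muD[simp, measurable_cong]: "sets muD = sets borel" unfolding muD_def by simp
lemma space_muP[simp]: "space muP = UNIV" unfolding muP_def by simp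
lemma space_muD[simp]: "space muD = UNIV" unfolding muD_def by simp

lemma indep_XY: "indep_var borel (X i) borel (Y i)"
proof -
  let ?W = "\<lambda>j. case j of Inl i \<Rightarrow> X i | Inr i \<Rightarrow> Y i"
  have *: "indep_var (PiM {Inl i} (\<lambda>_. borel)) (\<lambda>\<omega>. restrict (\<lambda>j. ?W j \<omega>) {Inl i})
              (PiM {Inr i} (\<lambda>_. borel)) (\<lambda>\<omega>. restrict (\<lambda>j. ?W j \<omega>) {Inr i})"
    by (rule indep_var_restrict[OF ind]) auto
  have "indep_var borel ((\<lambda>g. g (Inl i)) \<circ> (\<lambda>\<omega>. restrict (\<lambda>j. ?W j \<omega>) {Inl i}))
                 borel ((\<lambda>g. g (Inr i)) \<circ> (\<lambda>\<omega>. restrict (\<lambda>j. ?W j \<omega>) {Inr i}))"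
  proof (rule indep_var_compose[OF *])
    show "(\<lambda>g. g (Inl i)) \<in> PiM {Inl i} (\<lambda>_::nat+nat. borel) \<rightarrow>\<^sub>M (borel :: 'd measure)"
      by (rule measurable_component_singleton) simp
    show "(\<lambda>g. g (Inr i)) \<in> PiM {Inr i} (\<lambda>_::nat+nat. borel) \<rightarrow>\<^sub>M (borel :: 'd measure)"
      by (rule measurable_component_singleton) simp
  qed
  moreover have "((\<lambda>g. g (Inl i)) \<circ> (\<lambda>\<omega>. restrict (\<lambda>j. ?W j \<omega>) {Inl i})) = X i"
    by (auto simp: fun_eq_iff)
  moreover have "((\<lambda>g. g (Inr i)) \<circ> (\<lambda>\<omega>. restrict (\<lambda>j. ?W j \<omega>) {Inr i})) = Y i"
    by (auto simp: fun_eq_iff)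
  ultimately show ?thesis by simp
qed

lemma joint: "distr M (borel \<Otimes>\<^sub>M borel) (\<lambda>\<omega>. (X i \<omega>, Y i \<omega>)) = muP \<Otimes>\<^sub>M muD"
  using indep_XY[of i] unfolding indep_var_distribution_eq by (simp add: distr_X distr_Y)

lemma indep_pairs:
  assumes f[measurable]: "f \<in> borel_measurable (borel \<Otimes>\<^sub>M borel)"
  shows "indep_vars (\<lambda>_. borel) (\<lambda>i \<omega>. f (X i \<omega>, Y i \<omega>)) UNIV"
proof -
  let ?W = "\<lambda>j. case j of Inl i \<Rightarrow> X i | Inr i \<Rightarrow> Y i"
  have *: "indep_vars (\<lambda>j. PiM {Inl j, Inr j} (\<lambda>_. borel)) (\<lambda>j \<omega>. restrict (\<lambda>k. ?W k \<omega>) {Inl j, Inr j}) UNIV"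
    by (rule indep_vars_restrict[OF ind]) (auto simp: disjoint_family_on_def)
  have m: "(\<lambda>g. f (g (Inl j), g (Inr j))) \<in> PiM {Inl j, Inr j} (\<lambda>_. borel) \<rightarrow>\<^sub>M borel" for j :: nat
  proof -
    have a: "(\<lambda>g. g (Inl j)) \<in> PiM {Inl j, Inr j} (\<lambda>_::nat+nat. borel) \<rightarrow>\<^sub>M (borel :: 'd measure)"
      by (rule measurable_component_singleton) simp
    have b: "(\<lambda>g. g (Inr j)) \<in> PiM {Inl j, Inr j} (\<lambda>_::nat+nat. borel) \<rightarrow>\<^sub>M (borel :: 'd measure)"
      by (rule measurable_component_singleton) simp
    show ?thesis by (rule measurable_compose[OF measurable_Pair[OF a b] f])
  qed
  have "indep_vars (\<lambda>_. borel) (\<lambda>j \<omega>. (\<lambda>g. f (g (Inl j), g (Inr j))) (restrict (\<lambda>k. ?W k \<omega>) {Inl j, Inr j})) UNIV"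
    by (rule indep_vars_compose2[OF *]) (rule m)
  then show ?thesis by simp
qed

lemma slln_pair:
  fixes f :: "'d \<times> 'd \<Rightarrow> real"
  assumes f[measurable]: "f \<in> borel_measurable (borel \<Otimes>\<^sub>M borel)" and ab: "a < b"
    and fb: "\<And>x y. x \<in> \<Omega> \<Longrightarrow> y \<in> \<Omega> \<Longrightarrow> f (x, y) \<in> {a..b}"
  shows "AE \<omega> in M. (\<lambda>n. (\<Sum>i<n. f (X i \<omega>, Y i \<omega>)) / real n) \<longlonglongrightarrow> integral\<^sup>L (muP \<Otimes>\<^sub>M muD) f"
proof -
  define Z where "Z = (\<lambda>i \<omega>. f (X i \<omega>, Y i \<omega>))"
  have Zm[measurable]: "Z i \<in> borel_measurable M" for i unfolding Z_def by measurable
  have indZ: "indep_vars (\<lambda>_. borel) Z UNIV" unfolding Z_def by (rule indep_pairs[OF f])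
  have pm: "(\<lambda>\<omega>. (X i \<omega>, Y i \<omega>)) \<in> M \<rightarrow>\<^sub>M borel \<Otimes>\<^sub>M borel" for i by measurable
  have dZ: "distr M borel (Z i) = distr (muP \<Otimes>\<^sub>M muD) borel f" for i
  proof -
    have "distr (muP \<Otimes>\<^sub>M muD) borel f = distr (distr M (borel \<Otimes>\<^sub>M borel) (\<lambda>\<omega>. (X i \<omega>, Y i \<omega>))) borel f"
      using joint by simp
    also have "\<dots> = distr M borel (f \<circ> (\<lambda>\<omega>. (X i \<omega>, Y i \<omega>)))" by (rule distr_distr) (use pm in auto)
    finally show ?thesis by (simp add: Z_def o_def)
  qed
  define E where "E = expectation (Z 0)"
  have EZ: "E = integral\<^sup>L (muP \<Otimes>\<^sub>M muD) f"
  proof -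
    have "integral\<^sup>L (muP \<Otimes>\<^sub>M muD) f = integral\<^sup>L (distr M (borel \<Otimes>\<^sub>M borel) (\<lambda>\<omega>. (X 0 \<omega>, Y 0 \<omega>))) f"
      using joint by simp
    also have "\<dots> = expectation (Z 0)" unfolding Z_def by (rule integral_distr) (use pm in auto)
    finally show ?thesis unfolding E_def by simp
  qed
  have inrange: "\<omega> \<in> space M \<Longrightarrow> Z i \<omega> \<in> {a..b}" for i \<omega> using fb XO YO unfolding Z_def by auto
  have hoeff: "prob {\<omega>\<in>space M. \<bar>(\<Sum>i\<in>{..<n}. Z i \<omega>) / real (card {..<n}) - E\<bar> \<ge> \<epsilon>}
                 \<le> 2 * exp (-2 * real (card {..<n}) * \<epsilon>\<^sup>2 / (b - a)\<^sup>2)" if n: "n > 0" and e: "\<epsilon> \<ge> 0" for n \<epsilon>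
  proof -
    interpret H: Hoeffding_ineq_iid M "{..<n}" Z "Z 0" a b E
    proof unfold_locales
      show "indep_vars (\<lambda>_. borel) Z {..<n}" by (rule indep_vars_subset[OF indZ]) simp
      show "distr M borel (Z i) = distr M borel (Z 0)" for i using dZ by simp
      show "AE x in M. Z 0 x \<in> {a..b}" using inrange by simp
    qed (simp_all add: E_def)
    have ne: "{..<n} \<noteq> {}" using n by auto
    show ?thesis using H.Hoeffding_ineq_abs_ge'[OF e ab ne] by simp
  qed
  have AEeps: "AE \<omega> in M. eventually (\<lambda>n. \<bar>(\<Sum>i<n. Z i \<omega>) / real n - E\<bar> < \<epsilon>) sequentially" if e: "\<epsilon> > 0" for \<epsilon>
  proof -
    define B where "B n = {\<omega>\<in>space M. \<bar>(\<Sum>i<Suc n. Z i \<omega>) / real (Suc n) - E\<bar> \<ge> \<epsilon>}" for n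
    have Bm: "B n \<in> sets M" for n unfolding B_def by measurable
    define q where "q = exp (-2 * \<epsilon>\<^sup>2 / (b - a)\<^sup>2)"
    have q: "0 < q" "q < 1" unfolding q_def using e ab by auto
    have "summable (\<lambda>n. measure M (B n))"
    proof (rule summable_comparison_test')
      show "summable (\<lambda>n. 2 * q ^ Suc n)" using q by (intro summable_mult summable_Suc_iff[THEN iffD2] summable_geometric) simp
      show "norm (measure M (B n)) \<le> 2 * q ^ Suc n" for n
      proof -
        have eq: "x * (-2 * y / z) = -2 * x * y / z" for x y z :: real by (simp add: algebra_simps)
        have "q ^ Suc n = exp (real (Suc n) * (-2 * \<epsilon>\<^sup>2 / (b - a)\<^sup>2))"
          unfolding q_def by (rule exp_of_nat_mult[symmetric])
        also have "\<dots> = exp (-2 * real (Suc n) * \<epsilon>\<^sup>2 / (b - a)\<^sup>2)" by (simp only: eq)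
        finally have "exp (-2 * real (Suc n) * \<epsilon>\<^sup>2 / (b - a)\<^sup>2) = q ^ Suc n" by (rule sym)
        then show ?thesis using hoeff[of "Suc n" \<epsilon>] e unfolding B_def by simp
      qed
    qed
    from borel_cantelli_AE1[OF Bm _ this]
    have "AE \<omega> in M. eventually (\<lambda>n. \<omega> \<in> space M - B n) sequentially" by (simp add: less_top[symmetric])
    then show ?thesis
    proof (rule AE_mp, intro AE_I2 impI)
      fix \<omega> assume "\<omega> \<in> space M" and ev: "eventually (\<lambda>n. \<omega> \<in> space M - B n) sequentially"
      have "eventually (\<lambda>n. \<bar>(\<Sum>i<Suc n. Z i \<omega>) / real (Suc n) - E\<bar> < \<epsilon>) sequentially"
        using ev by eventually_elim (auto simp: B_def not_le)
      then show "eventually (\<lambda>n. \<bar>(\<Sum>i<n. Z i \<omega>) / real n - E\<bar> < \<epsilon>) sequentially"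
        by (subst eventually_sequentially_Suc[symmetric]) simp
    qed
  qed
  have "AE \<omega> in M. \<forall>k::nat. eventually (\<lambda>n. \<bar>(\<Sum>i<n. Z i \<omega>) / real n - E\<bar> < inverse (real (Suc k))) sequentially"
    unfolding AE_all_countable by (intro allI AEeps) simp
  then show ?thesis
  proof (rule AE_mp, intro AE_I2 impI)
    fix \<omega> assume all: "\<forall>k::nat. eventually (\<lambda>n. \<bar>(\<Sum>i<n. Z i \<omega>) / real n - E\<bar> < inverse (real (Suc k))) sequentially"
    show "(\<lambda>n. (\<Sum>i<n. f (X i \<omega>, Y i \<omega>)) / real n) \<longlonglongrightarrow> integral\<^sup>L (muP \<Otimes>\<^sub>M muD) f"
      unfolding tendsto_iff
    proof (intro allI impI)
      fix e :: real assume "e > 0"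
      then obtain k where k: "inverse (real (Suc k)) < e" using reals_Archimedean by blast
      show "eventually (\<lambda>n. dist ((\<Sum>i<n. f (X i \<omega>, Y i \<omega>)) / real n) (integral\<^sup>L (muP \<Otimes>\<^sub>M muD) f) < e) sequentially"
        using all[rule_format, of k] by eventually_elim (use k in \<open>auto simp: dist_real_def Z_def EZ\<close>)
    qed
  qed
qed

end

context stacker
begin

lemma Omega_borel[measurable]: "\<Omega> \<in> sets borel"
  using borel_closed[OF compact_imp_closed[OF cpt]] .

lemma muD_null: "UNIV - \<Omega> \<in> null_sets muD"
proof -
  have "emeasure muD (UNIV - \<Omega>) = emeasure (distr M borel (Y 0)) (UNIV - \<Omega>)" by (simp add: distr_Y)
  also have "\<dots> = emeasure M (Y 0 -` (UNIV - \<Omega>) \<inter> space M)" by (rule emeasure_distr) auto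
  also have "Y 0 -` (UNIV - \<Omega>) \<inter> space M = {}" using YO by auto
  finally show ?thesis by (simp add: null_sets_def)
qed

lemma muP_null: "UNIV - \<Omega> \<in> null_sets muP"
proof -
  have "emeasure muP (UNIV - \<Omega>) = emeasure (distr M borel (X 0)) (UNIV - \<Omega>)" by (simp add: distr_X)
  also have "\<dots> = emeasure M (X 0 -` (UNIV - \<Omega>) \<inter> space M)" by (rule emeasure_distr) auto
  also have "X 0 -` (UNIV - \<Omega>) \<inter> space M = {}" using XO by auto
  finally show ?thesis by (simp add: null_sets_def)
qed

lemma muD_Omega: "B \<in> sets borel \<Longrightarrow> measure muD (B \<inter> \<Omega>) = measure muD B"
proof -
  assume B: "B \<in> sets borel"
  have "B \<inter> \<Omega> = B - (UNIV - \<Omega>)" by auto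
  then show ?thesis using measure_Diff_null_set[OF _ muD_null, of B] B by simp
qed

lemma muP_Omega: "B \<in> sets borel \<Longrightarrow> measure muP (B \<inter> \<Omega>) = measure muP B"
proof -
  assume B: "B \<in> sets borel"
  have "B \<inter> \<Omega> = B - (UNIV - \<Omega>)" by auto
  then show ?thesis using measure_Diff_null_set[OF _ muP_null, of B] B by simp
qed

lemma W_le:
  fixes A :: "nat \<Rightarrow> 'd set" and P u :: "nat \<Rightarrow> nat \<Rightarrow> real" and m :: nat
  assumes Ab: "\<And>j. A j \<in> sets borel" and disj: "\<And>j k. j \<noteq> k \<Longrightarrow> A j \<inter> A k = {}"
    and sub: "\<And>j. A j \<subseteq> \<Omega>" and cover: "\<Omega> \<subseteq> (\<Union>j<m. A j)"
    and P0: "\<And>j k. 0 \<le> P j k"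
    and rows: "\<And>j. j < m \<Longrightarrow> (\<Sum>k<m. P j k) = measure muD (A j)"
    and cols: "\<And>k. k < m \<Longrightarrow> (\<Sum>j<m. P j k) = measure muP (A k)"
    and u: "\<And>j k x y. y \<in> A j \<Longrightarrow> x \<in> A k \<Longrightarrow> dist x y \<le> u j k"
  shows "wasserstein \<Omega> \<phi>D \<phi>P \<le> (\<Sum>j<m. \<Sum>k<m. P j k * u j k)"
proof -
  interpret D: prob_space muD by (rule prob_muD)
  interpret PP: prob_space muP by (rule prob_muP)
  interpret DP: pair_prob_space muD muP ..
  define a where "a j = measure muD (A j)" for j
  define b where "b k = measure muP (A k)" for k
  define c where "c j k = P j k / (a j * b k)" for j k
  define g where "g z = (\<Sum>j<m. \<Sum>k<m. c j k * indicator (A j \<times> A k) z)" for z :: "'d \<times> 'd"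
  have a0: "0 \<le> a j" for j unfolding a_def by simp
  have b0: "0 \<le> b k" for k unfolding b_def by simp
  have Pa: "P j k \<le> a j" if "j < m" "k < m" for j k
    using rows[OF that(1)] member_le_sum[of k "{..<m}" "P j"] P0 that unfolding a_def by auto
  have Pb: "P j k \<le> b k" if "j < m" "k < m" for j k
    using cols[OF that(2)] member_le_sum[of j "{..<m}" "\<lambda>j. P j k"] P0 that unfolding b_def by auto
  have c0: "0 \<le> c j k" for j k unfolding c_def using P0 a0 b0 by simp
  have g0: "0 \<le> g z" for z unfolding g_def using c0 by (intro sum_nonneg) auto
  have cab: "c j k * (a j * b k) = P j k" if "j < m" "k < m" for j k
  proof (cases "a j * b k = 0")
    case True
    then have "a j = 0 \<or> b k = 0" by simp
    then have "P j k = 0" using Pa[OF that] Pb[OF that] P0[of j k] by auto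
    then show ?thesis unfolding c_def by simp
  qed (simp add: c_def)
  have sets_DP: "sets (muD \<Otimes>\<^sub>M muP) = sets (borel \<Otimes>\<^sub>M borel)"
    by (rule sets_pair_measure_cong) simp_all
  have space_DP: "space (muD \<Otimes>\<^sub>M muP) = UNIV" by (simp add: space_pair_measure)
  have rect: "S \<times> T \<in> sets (muD \<Otimes>\<^sub>M muP)" if "S \<in> sets borel" "T \<in> sets borel" for S T
    using that by (intro pair_measureI) simp_all
  have mt: "measure (muD \<Otimes>\<^sub>M muP) (S \<times> T) = measure muD S * measure muP T"
    if "S \<in> sets borel" "T \<in> sets borel" for S T
    using that by (simp add: measure_def PP.emeasure_pair_measure_Times enn2real_mult)
  have int_rect: "integrable (muD \<Otimes>\<^sub>M muP) (indicator (S \<times> T) :: 'd \<times> 'd \<Rightarrow> real)"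
    if "S \<in> sets borel" "T \<in> sets borel" for S T
    using rect[OF that] by (intro integrable_real_indicator) (simp_all add: DP.emeasure_finite less_top[symmetric])
  have I_rect: "integral\<^sup>L (muD \<Otimes>\<^sub>M muP) (\<lambda>z. indicator (S \<times> T) z :: real) = measure muD S * measure muP T"
    if "S \<in> sets borel" "T \<in> sets borel" for S T
    using mt[OF that] by (simp add: space_DP)
  have I_sum: "integral\<^sup>L (muD \<Otimes>\<^sub>M muP) (\<lambda>z. \<Sum>j<m. \<Sum>k<m. d j k * indicator (S j \<times> T k) z)
      = (\<Sum>j<m. \<Sum>k<m. d j k * (measure muD (S j) * measure muP (T k)))"
    if ST: "\<And>j. S j \<in> sets borel" "\<And>k. T k \<in> sets borel" for d S T
  proof -
    have "integral\<^sup>L (muD \<Otimes>\<^sub>M muP) (\<lambda>z. \<Sum>j<m. \<Sum>k<m. d j k * indicator (S j \<times> T k) z)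
       = (\<Sum>j<m. integral\<^sup>L (muD \<Otimes>\<^sub>M muP) (\<lambda>z. \<Sum>k<m. d j k * indicator (S j \<times> T k) z))"
      by (rule Bochner_Integration.integral_sum, rule Bochner_Integration.integrable_sum,
          rule Bochner_Integration.integrable_mult_right, rule int_rect[OF ST])
    also have "\<dots> = (\<Sum>j<m. \<Sum>k<m. integral\<^sup>L (muD \<Otimes>\<^sub>M muP) (\<lambda>z. d j k * indicator (S j \<times> T k) z))"
      by (intro sum.cong refl, rule Bochner_Integration.integral_sum,
          rule Bochner_Integration.integrable_mult_right, rule int_rect[OF ST])
    also have "\<dots> = (\<Sum>j<m. \<Sum>k<m. d j k * (measure muD (S j) * measure muP (T k)))"
    proof (intro sum.cong refl)
      fix j k
      have "integral\<^sup>L (muD \<Otimes>\<^sub>M muP) (\<lambda>z. d j k * indicator (S j \<times> T k) z)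
          = d j k * integral\<^sup>L (muD \<Otimes>\<^sub>M muP) (indicator (S j \<times> T k) :: _ \<Rightarrow> real)"
        by (rule Bochner_Integration.integral_mult_right, rule int_rect[OF ST])
      then show "integral\<^sup>L (muD \<Otimes>\<^sub>M muP) (\<lambda>z. d j k * indicator (S j \<times> T k) z)
          = d j k * (measure muD (S j) * measure muP (T k))" using I_rect[OF ST(1)[of j] ST(2)[of k]] by simp
    qed
    finally show ?thesis .
  qed
  have gm[measurable]: "g \<in> borel_measurable (muD \<Otimes>\<^sub>M muP)"
    unfolding g_def
    by (intro borel_measurable_sum borel_measurable_times borel_measurable_const borel_measurable_indicator rect Ab)
  have gint: "integrable (muD \<Otimes>\<^sub>M muP) g"
    unfolding g_def by (rule Bochner_Integration.integrable_sum, rule Bochner_Integration.integrable_sum, rule Bochner_Integration.integrable_mult_right, rule int_rect[OF Ab Ab])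
  define \<gamma> where "\<gamma> = density (muD \<Otimes>\<^sub>M muP) (\<lambda>z. ennreal (g z))"
  have s\<gamma>: "sets \<gamma> = sets (borel \<Otimes>\<^sub>M borel)" unfolding \<gamma>_def using sets_DP by simp
  have sp\<gamma>: "space \<gamma> = UNIV" unfolding \<gamma>_def by (simp add: space_DP)
  have em\<gamma>: "emeasure \<gamma> S = ennreal (integral\<^sup>L (muD \<Otimes>\<^sub>M muP) (\<lambda>z. g z * indicator S z))"
    if S: "S \<in> sets (muD \<Otimes>\<^sub>M muP)" for S
  proof -
    have "emeasure \<gamma> S = (\<integral>\<^sup>+z. ennreal (g z) * indicator S z \<partial>(muD \<Otimes>\<^sub>M muP))"
      unfolding \<gamma>_def using S by (simp add: emeasure_density)
    also have "\<dots> = (\<integral>\<^sup>+z. ennreal (g z * indicator S z) \<partial>(muD \<Otimes>\<^sub>M muP))"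
      by (intro nn_integral_cong) (simp add: indicator_def)
    also have "\<dots> = ennreal (integral\<^sup>L (muD \<Otimes>\<^sub>M muP) (\<lambda>z. g z * indicator S z))"
    proof (rule nn_integral_eq_integral)
      have "integrable (muD \<Otimes>\<^sub>M muP) (\<lambda>z. indicator S z *\<^sub>R g z)"
        by (rule integrable_mult_indicator[OF S gint])
      then show "integrable (muD \<Otimes>\<^sub>M muP) (\<lambda>z. g z * indicator S z)" by (simp add: mult.commute)
    qed (use g0 in simp)
    finally show ?thesis .
  qed
  have row1: "(\<Sum>k<m. c j k * (t * b k)) = t" if j: "j < m" and t: "0 \<le> t" "t \<le> a j" for j t
  proof (cases "a j = 0")
    case True then show ?thesis using t by simp
  next
    case False
    then have "a j > 0" using a0[of j] by simp
    have "(\<Sum>k<m. c j k * (t * b k)) = (\<Sum>k<m. P j k * t / a j)"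
    proof (intro sum.cong refl)
      fix k assume "k \<in> {..<m}"
      then have "c j k * (a j * b k) = P j k" using cab j by simp
      then show "c j k * (t * b k) = P j k * t / a j" using \<open>a j > 0\<close>
        by (simp add: field_simps)
    qed
    also have "\<dots> = (\<Sum>k<m. P j k) * t / a j" by (simp add: sum_distrib_right sum_divide_distrib)
    also have "\<dots> = t" using rows[OF j] \<open>a j > 0\<close> unfolding a_def by simp
    finally show ?thesis .
  qed
  have col1: "(\<Sum>j<m. c j k * (a j * t)) = t" if k: "k < m" and t: "0 \<le> t" "t \<le> b k" for k t
  proof (cases "b k = 0")
    case True then show ?thesis using t by simp
  next
    case False
    then have "b k > 0" using b0[of k] by simp
    have "(\<Sum>j<m. c j k * (a j * t)) = (\<Sum>j<m. P j k * t / b k)"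
    proof (intro sum.cong refl)
      fix j assume "j \<in> {..<m}"
      then have "c j k * (a j * b k) = P j k" using cab k by simp
      then show "c j k * (a j * t) = P j k * t / b k" using \<open>b k > 0\<close>
        by (simp add: field_simps)
    qed
    also have "\<dots> = (\<Sum>j<m. P j k) * t / b k" by (simp add: sum_distrib_right sum_divide_distrib)
    also have "\<dots> = t" using cols[OF k] \<open>b k > 0\<close> unfolding b_def by simp
    finally show ?thesis .
  qed
  have UA: "(\<Union>j<m. A j \<inter> B) = B \<inter> \<Omega>" for B using sub cover by blast
  have dfam: "disjoint_family_on (\<lambda>j. A j \<inter> B) {..<m}" for B
    using disj by (auto simp: disjoint_family_on_def)
  have fstm: "distr \<gamma> borel fst = muD"
  proof (rule measure_eqI)
    show "sets (distr \<gamma> borel fst) = sets muD" by simp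
    fix B assume "B \<in> sets (distr \<gamma> borel fst)"
    then have B[measurable]: "B \<in> sets borel" by simp
    have fm: "fst \<in> \<gamma> \<rightarrow>\<^sub>M borel" unfolding measurable_cong_sets[OF s\<gamma> refl] by (rule measurable_fst)
    have "emeasure (distr \<gamma> borel fst) B = emeasure \<gamma> (B \<times> UNIV)"
      using emeasure_distr[OF fm B] sp\<gamma> by (simp add: vimage_fst)
    also have "\<dots> = ennreal (integral\<^sup>L (muD \<Otimes>\<^sub>M muP) (\<lambda>z. g z * indicator (B \<times> UNIV) z))"
      by (rule em\<gamma>) (simp add: rect)
    also have "integral\<^sup>L (muD \<Otimes>\<^sub>M muP) (\<lambda>z. g z * indicator (B \<times> UNIV) z)
        = integral\<^sup>L (muD \<Otimes>\<^sub>M muP) (\<lambda>z. \<Sum>j<m. \<Sum>k<m. c j k * indicator ((A j \<inter> B) \<times> A k) z)"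
    proof (intro Bochner_Integration.integral_cong refl)
      fix z :: "'d \<times> 'd"
      have ii: "indicator ((S \<inter> B) \<times> T) z = (indicator (S \<times> T) z * indicator (B \<times> UNIV) z :: real)" for S T
        by (auto simp: indicator_def)
      show "g z * indicator (B \<times> UNIV) z = (\<Sum>j<m. \<Sum>k<m. c j k * indicator ((A j \<inter> B) \<times> A k) z)"
        unfolding g_def sum_distrib_right by (intro sum.cong refl) (simp add: ii mult.assoc)
    qed
    also have "\<dots> = (\<Sum>j<m. \<Sum>k<m. c j k * (measure muD (A j \<inter> B) * b k))"
      unfolding b_def by (rule I_sum) (use Ab B in auto)
    also have "\<dots> = (\<Sum>j<m. measure muD (A j \<inter> B))"
    proof (intro sum.cong refl row1)
      fix j assume "j \<in> {..<m}"
      show "measure muD (A j \<inter> B) \<le> a j" unfolding a_def using Ab B by (intro D.finite_measure_mono) auto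
    qed simp_all
    also have "\<dots> = measure muD (\<Union>j<m. A j \<inter> B)"
      by (rule D.finite_measure_finite_Union[symmetric]) (use Ab B dfam in auto)
    also have "\<dots> = measure muD B" unfolding UA using muD_Omega[OF B] by simp
    finally show "emeasure (distr \<gamma> borel fst) B = emeasure muD B" by (simp add: D.emeasure_eq_measure)
  qed
  have sndm: "distr \<gamma> borel snd = muP"
  proof (rule measure_eqI)
    show "sets (distr \<gamma> borel snd) = sets muP" by simp
    fix B assume "B \<in> sets (distr \<gamma> borel snd)"
    then have B[measurable]: "B \<in> sets borel" by simp
    have fm: "snd \<in> \<gamma> \<rightarrow>\<^sub>M borel" unfolding measurable_cong_sets[OF s\<gamma> refl] by (rule measurable_snd)
    have "emeasure (distr \<gamma> borel snd) B = emeasure \<gamma> (UNIV \<times> B)"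
      using emeasure_distr[OF fm B] sp\<gamma> by (simp add: vimage_snd)
    also have "\<dots> = ennreal (integral\<^sup>L (muD \<Otimes>\<^sub>M muP) (\<lambda>z. g z * indicator (UNIV \<times> B) z))"
      by (rule em\<gamma>) (simp add: rect)
    also have "integral\<^sup>L (muD \<Otimes>\<^sub>M muP) (\<lambda>z. g z * indicator (UNIV \<times> B) z)
        = integral\<^sup>L (muD \<Otimes>\<^sub>M muP) (\<lambda>z. \<Sum>j<m. \<Sum>k<m. c j k * indicator (A j \<times> (A k \<inter> B)) z)"
    proof (intro Bochner_Integration.integral_cong refl)
      fix z :: "'d \<times> 'd"
      have ii: "indicator (S \<times> (T \<inter> B)) z = (indicator (S \<times> T) z * indicator (UNIV \<times> B) z :: real)" for S T
        by (auto simp: indicator_def)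
      show "g z * indicator (UNIV \<times> B) z = (\<Sum>j<m. \<Sum>k<m. c j k * indicator (A j \<times> (A k \<inter> B)) z)"
        unfolding g_def sum_distrib_right by (intro sum.cong refl) (simp add: ii mult.assoc)
    qed
    also have "\<dots> = (\<Sum>j<m. \<Sum>k<m. c j k * (a j * measure muP (A k \<inter> B)))"
      unfolding a_def by (rule I_sum) (use Ab B in auto)
    also have "\<dots> = (\<Sum>k<m. \<Sum>j<m. c j k * (a j * measure muP (A k \<inter> B)))" by (rule sum.swap)
    also have "\<dots> = (\<Sum>k<m. measure muP (A k \<inter> B))"
    proof (intro sum.cong refl col1)
      fix k assume "k \<in> {..<m}"
      show "measure muP (A k \<inter> B) \<le> b k" unfolding b_def using Ab B by (intro PP.finite_measure_mono) auto
    qed simp_all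
    also have "\<dots> = measure muP (\<Union>k<m. A k \<inter> B)"
      by (rule PP.finite_measure_finite_Union[symmetric]) (use Ab B dfam in auto)
    also have "\<dots> = measure muP B" unfolding UA using muP_Omega[OF B] by simp
    finally show "emeasure (distr \<gamma> borel snd) B = emeasure muP B" by (simp add: PP.emeasure_eq_measure)
  qed
  have outside: "emeasure \<gamma> (UNIV - \<Omega> \<times> \<Omega>) = 0"
  proof -
    have S: "UNIV - \<Omega> \<times> \<Omega> \<in> sets (muD \<Otimes>\<^sub>M muP)"
      using rect[OF Omega_borel Omega_borel] space_DP by (metis sets.compl_sets)
    have "integral\<^sup>L (muD \<Otimes>\<^sub>M muP) (\<lambda>z. g z * indicator (UNIV - \<Omega> \<times> \<Omega>) z) = integral\<^sup>L (muD \<Otimes>\<^sub>M muP) (\<lambda>z. 0)"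
    proof (intro Bochner_Integration.integral_cong refl)
      fix z :: "'d \<times> 'd"
      show "g z * indicator (UNIV - \<Omega> \<times> \<Omega>) z = 0"
      proof (cases "z \<in> \<Omega> \<times> \<Omega>")
        case False
        then have "g z = 0" unfolding g_def using sub by (intro sum.neutral ballI) (auto simp: indicator_def)
        then show ?thesis by simp
      qed simp
    qed
    then show ?thesis using em\<gamma>[OF S] by simp
  qed
  have coup: "\<gamma> \<in> couplings \<Omega> (density lborel (\<lambda>x. ennreal (\<phi>D x))) (density lborel (\<lambda>x. ennreal (\<phi>P x)))"
    unfolding couplings_def using s\<gamma> outside fstm sndm by (simp add: muD_def muP_def)
  define h where "h z = (\<Sum>j<m. \<Sum>k<m. c j k * u j k * indicator (A j \<times> A k) z)" for z :: "'d \<times> 'd"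
  have hint: "integrable (muD \<Otimes>\<^sub>M muP) h"
    unfolding h_def by (rule Bochner_Integration.integrable_sum, rule Bochner_Integration.integrable_sum, rule Bochner_Integration.integrable_mult_right, rule int_rect[OF Ab Ab])
  have gh: "g z * norm (snd z - fst z) \<le> h z" for z
  proof -
    have "g z * norm (snd z - fst z) = (\<Sum>j<m. \<Sum>k<m. c j k * indicator (A j \<times> A k) z * norm (snd z - fst z))"
      unfolding g_def sum_distrib_right by (rule refl)
    also have "\<dots> \<le> h z" unfolding h_def
    proof (intro sum_mono)
      fix j k
      show "c j k * indicator (A j \<times> A k) z * norm (snd z - fst z) \<le> c j k * u j k * indicator (A j \<times> A k) z"
      proof (cases "z \<in> A j \<times> A k")
        case True
        then have "norm (snd z - fst z) \<le> u j k" using u[of "fst z" j "snd z" k] by (auto simp: dist_norm)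
        then show ?thesis using True c0[of j k] by (simp add: mult_left_mono)
      qed simp
    qed
    finally show ?thesis .
  qed
  have nm: "(\<lambda>z::'d\<times>'d. norm (snd z - fst z)) \<in> borel_measurable (muD \<Otimes>\<^sub>M muP)"
    unfolding measurable_cong_sets[OF sets_DP refl] by measurable
  have cost_int: "integrable (muD \<Otimes>\<^sub>M muP) (\<lambda>z. g z * norm (snd z - fst z))"
  proof (rule Bochner_Integration.integrable_bound[OF hint])
    show "(\<lambda>z. g z * norm (snd z - fst z)) \<in> borel_measurable (muD \<Otimes>\<^sub>M muP)" using gm nm by measurable
    show "AE z in muD \<Otimes>\<^sub>M muP. norm (g z * norm (snd z - fst z)) \<le> norm (h z)"
      using gh g0 by (intro AE_I2) (smt (verit) mult_nonneg_nonneg norm_ge_zero real_norm_def)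
  qed
  have "integral\<^sup>L \<gamma> (\<lambda>z. norm (snd z - fst z)) = integral\<^sup>L (muD \<Otimes>\<^sub>M muP) (\<lambda>z. g z *\<^sub>R norm (snd z - fst z))"
    unfolding \<gamma>_def using nm gm g0 by (intro integral_density) auto
  also have "\<dots> \<le> integral\<^sup>L (muD \<Otimes>\<^sub>M muP) h"
    using cost_int hint gh by (intro integral_mono) auto
  also have "\<dots> = (\<Sum>j<m. \<Sum>k<m. c j k * u j k * (a j * b k))"
    unfolding h_def a_def b_def by (rule I_sum[OF Ab Ab])
  also have "\<dots> = (\<Sum>j<m. \<Sum>k<m. P j k * u j k)"
    by (intro sum.cong refl) (use cab in \<open>simp add: mult.commute mult.left_commute\<close>)
  finally have cost: "integral\<^sup>L \<gamma> (\<lambda>z. norm (snd z - fst z)) \<le> (\<Sum>j<m. \<Sum>k<m. P j k * u j k)" .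
  have bdd: "bdd_below ((\<lambda>\<gamma>. integral\<^sup>L \<gamma> (\<lambda>z. norm (snd z - fst z))) `
      couplings \<Omega> (density lborel (\<lambda>x. ennreal (\<phi>D x))) (density lborel (\<lambda>x. ennreal (\<phi>P x))))"
    by (rule bdd_belowI[of _ 0]) auto
  have "wasserstein \<Omega> \<phi>D \<phi>P \<le> integral\<^sup>L \<gamma> (\<lambda>z. norm (snd z - fst z))"
    unfolding wasserstein_def by (rule cINF_lower[OF bdd coup])
  with cost show ?thesis by simp
qed

end

lemma QP_bound:
  fixes Q P l :: "nat \<Rightarrow> nat \<Rightarrow> real"
  assumes L: "\<And>j k. j < m \<Longrightarrow> k < m \<Longrightarrow> \<bar>l j k\<bar> \<le> L"
  shows "(\<Sum>j<m. \<Sum>k<m. P j k * l j k) - L * (\<Sum>j<m. \<Sum>k<m. \<bar>P j k - Q j k\<bar>)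
         \<le> (\<Sum>j<m. \<Sum>k<m. Q j k * l j k)"
proof -
  have t: "P j k * l j k - L * \<bar>P j k - Q j k\<bar> \<le> Q j k * l j k" if "j < m" "k < m" for j k
  proof -
    have "\<bar>(P j k - Q j k) * l j k\<bar> \<le> \<bar>P j k - Q j k\<bar> * L"
      unfolding abs_mult using L[OF that] by (intro mult_left_mono) auto
    then show ?thesis by (simp add: algebra_simps abs_le_iff)
  qed
  have "(\<Sum>j<m. \<Sum>k<m. P j k * l j k) - L * (\<Sum>j<m. \<Sum>k<m. \<bar>P j k - Q j k\<bar>)
      = (\<Sum>j<m. \<Sum>k<m. P j k * l j k - L * \<bar>P j k - Q j k\<bar>)"
    by (simp add: sum_subtractf sum_distrib_left)
  also have "\<dots> \<le> (\<Sum>j<m. \<Sum>k<m. Q j k * l j k)"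
    by (intro sum_mono t) auto
  finally show ?thesis .
qed

lemma partition_exists:
  fixes \<Omega> :: "'d::euclidean_space set"
  assumes cpt: "compact \<Omega>" and d: "\<delta> > 0"
  shows "\<exists>m A c. (\<forall>j. A j \<in> sets borel) \<and> cells \<Omega> A m c \<delta> \<and> (\<forall>j<m. c j \<in> \<Omega>)"
proof -
  have tb: "\<forall>e>0. \<exists>k. finite k \<and> k \<subseteq> \<Omega> \<and> \<Omega> \<subseteq> (\<Union>x\<in>k. ball x e)"
    by (rule seq_compact_imp_totally_bounded[OF compact_imp_seq_compact[OF cpt]])
  have "\<exists>k. finite k \<and> k \<subseteq> \<Omega> \<and> \<Omega> \<subseteq> (\<Union>x\<in>k. ball x \<delta>)" by (rule tb[rule_format, OF d])
  then obtain K where K: "finite K" "K \<subseteq> \<Omega>" "\<Omega> \<subseteq> (\<Union>x\<in>K. ball x \<delta>)"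
    by (elim exE conjE) (rule that)
  obtain cs where cs: "set cs = K" using finite_list[OF K(1)] by blast
  define m where "m = length cs"
  define c where "c j = cs ! j" for j
  define A where "A j = \<Omega> \<inter> ball (c j) \<delta> - (\<Union>i\<in>{..<j}. ball (c i) \<delta>)" for j
  have Ob: "\<Omega> \<in> sets borel" using borel_closed[OF compact_imp_closed[OF cpt]] .
  have Ab: "\<forall>j. A j \<in> sets borel"
  proof
    fix j
    have o: "open (\<Union>i\<in>{..<j}. ball (c i) \<delta>)" by (intro open_UN ballI open_ball)
    show "A j \<in> sets borel" unfolding A_def by (intro sets.Diff sets.Int Ob borel_open open_ball o)
  qed
  have cm: "\<forall>j<m. c j \<in> \<Omega>" using cs K(2) unfolding c_def m_def by (auto intro: nth_mem)
  have "cells \<Omega> A m c \<delta>"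
  proof
    fix j k :: nat assume jk: "j \<noteq> k"
    show "A j \<inter> A k = {}"
    proof (rule ccontr)
      assume "A j \<inter> A k \<noteq> {}"
      then obtain x where x: "x \<in> A j" "x \<in> A k" by blast
      have bj: "x \<in> ball (c j) \<delta>" and bk: "x \<in> ball (c k) \<delta>" using x unfolding A_def by blast+
      have nj: "\<forall>i<j. x \<notin> ball (c i) \<delta>" and nk: "\<forall>i<k. x \<notin> ball (c i) \<delta>"
        using x unfolding A_def by blast+
      show False
      proof (cases "j < k")
        case True then show False using nk bj by blast
      next
        case False then have "k < j" using jk by simp
        then show False using nj bk by blast
      qed
    qed
  next
    show "\<Omega> \<subseteq> (\<Union>j<m. A j)"
    proof
      fix x assume x: "x \<in> \<Omega>"
      then obtain y where "y \<in> K" "x \<in> ball y \<delta>" using K(3) by blast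
      moreover from \<open>y \<in> K\<close> obtain j0 where "j0 < m" "c j0 = y" using cs unfolding c_def m_def
        by (auto simp: in_set_conv_nth)
      ultimately obtain j0 where "j0 < m" "x \<in> ball (c j0) \<delta>" by blast
      then have "\<exists>j. j < m \<and> x \<in> ball (c j) \<delta>" by blast
      then have "\<exists>j. (j < m \<and> x \<in> ball (c j) \<delta>) \<and> (\<forall>i<j. \<not> (i < m \<and> x \<in> ball (c i) \<delta>))"
        by (rule exists_least_iff[THEN iffD1])
      then obtain j where j: "j < m" "x \<in> ball (c j) \<delta>" and least: "\<forall>i<j. \<not> (i < m \<and> x \<in> ball (c i) \<delta>)"
        by (elim exE conjE) (rule that)
      have nin: "x \<notin> (\<Union>i\<in>{..<j}. ball (c i) \<delta>)" using least j(1) by auto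
      have "x \<in> A j" unfolding A_def using x j(2) nin by (intro DiffI IntI)
      then show "x \<in> (\<Union>j<m. A j)" using j by blast
    qed
  next
    fix j show "A j \<subseteq> \<Omega>" unfolding A_def by blast
  next
    fix j x assume "x \<in> A j"
    then have "x \<in> ball (c j) \<delta>" unfolding A_def by blast
    then show "dist x (c j) < \<delta>" by (simp add: dist_commute)
  qed
  then show ?thesis using Ab cm by blast
qed


context stacker
begin

lemma phiP_meas[measurable]: "\<phi>P \<in> borel_measurable borel"
proof -
  have "(\<lambda>x. ennreal (\<phi>P x)) \<in> borel_measurable lborel" by (rule distributed_borel_measurable[OF distX[of 0]])
  then have "(\<lambda>x. enn2real (ennreal (\<phi>P x))) \<in> borel_measurable lborel" by (rule borel_measurable_enn2real)
  then show ?thesis using P0 by (simp add: measurable_cong_sets[OF sets_lborel refl])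
qed
lemma phiD_meas[measurable]: "\<phi>D \<in> borel_measurable borel"
proof -
  have "(\<lambda>x. ennreal (\<phi>D x)) \<in> borel_measurable lborel" by (rule distributed_borel_measurable[OF distY[of 0]])
  then have "(\<lambda>x. enn2real (ennreal (\<phi>D x))) \<in> borel_measurable lborel" by (rule borel_measurable_enn2real)
  then show ?thesis using D0 by (simp add: measurable_cong_sets[OF sets_lborel refl])
qed

lemma int_snd: "S \<in> sets borel \<Longrightarrow> integral\<^sup>L (muP \<Otimes>\<^sub>M muD) (\<lambda>z. indicator S (snd z) :: real) = measure muD S"
proof -
  assume S: "S \<in> sets borel"
  interpret D: prob_space muD by (rule prob_muD)
  interpret PP: prob_space muP by (rule prob_muP)
  have "integral\<^sup>L (muP \<Otimes>\<^sub>M muD) (\<lambda>z. indicator S (snd z) :: real) = integral\<^sup>L (muP \<Otimes>\<^sub>M muD) (indicator (UNIV \<times> S) :: _ \<Rightarrow> real)"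
    by (rule Bochner_Integration.integral_cong) (auto simp: indicator_def)
  also have "\<dots> = measure (muP \<Otimes>\<^sub>M muD) (UNIV \<times> S)"
    by (simp add: space_pair_measure)
  also have "\<dots> = measure muD S" using S
    by (simp add: measure_def D.emeasure_pair_measure_Times PP.emeasure_space_1[simplified])
  finally show ?thesis .
qed

lemma int_fst: "S \<in> sets borel \<Longrightarrow> integral\<^sup>L (muP \<Otimes>\<^sub>M muD) (\<lambda>z. indicator S (fst z) :: real) = measure muP S"
proof -
  assume S: "S \<in> sets borel"
  interpret D: prob_space muD by (rule prob_muD)
  interpret PP: prob_space muP by (rule prob_muP)
  have "integral\<^sup>L (muP \<Otimes>\<^sub>M muD) (\<lambda>z. indicator S (fst z) :: real) = integral\<^sup>L (muP \<Otimes>\<^sub>M muD) (indicator (S \<times> UNIV) :: _ \<Rightarrow> real)"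
    by (rule Bochner_Integration.integral_cong) (auto simp: indicator_def)
  also have "\<dots> = measure (muP \<Otimes>\<^sub>M muD) (S \<times> UNIV)"
    by (simp add: space_pair_measure)
  also have "\<dots> = measure muP S" using S
    by (simp add: measure_def D.emeasure_pair_measure_Times D.emeasure_space_1[simplified])
  finally show ?thesis .
qed

lemma E_formula:
  "integral\<^sup>L (muP \<Otimes>\<^sub>M muD) (\<lambda>z. dist (fst z) (snd z))
     = (\<integral>x. \<integral>y. norm (y - x) * \<phi>P x * \<phi>D y \<partial>lborel \<partial>lborel)"
proof -
  interpret D: prob_space muD by (rule prob_muD)
  interpret PP: prob_space muP by (rule prob_muP)
  interpret DP: pair_prob_space muP muD ..
  obtain B where B: "\<forall>x\<in>\<Omega>. norm x \<le> B" using compact_imp_bounded[OF cpt] unfolding bounded_iff by blast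
  have pm: "(\<lambda>\<omega>. (X 0 \<omega>, Y 0 \<omega>)) \<in> M \<rightarrow>\<^sub>M borel \<Otimes>\<^sub>M borel" by measurable
  have fm: "(\<lambda>z::'d\<times>'d. dist (fst z) (snd z)) \<in> borel_measurable (borel \<Otimes>\<^sub>M borel)" by measurable
  have "integrable M (\<lambda>\<omega>. dist (X 0 \<omega>) (Y 0 \<omega>))"
  proof (rule integrable_const_bound)
    show "AE \<omega> in M. norm (dist (X 0 \<omega>) (Y 0 \<omega>)) \<le> 2 * B"
    proof (rule AE_I2)
      fix \<omega> assume "\<omega> \<in> space M"
      then have "norm (X 0 \<omega>) \<le> B" "norm (Y 0 \<omega>) \<le> B" using B XO YO by auto
      then show "norm (dist (X 0 \<omega>) (Y 0 \<omega>)) \<le> 2 * B"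
        using norm_triangle_ineq4[of "X 0 \<omega>" "Y 0 \<omega>"] by (simp add: dist_norm)
    qed
  qed measurable
  then have "integrable (distr M (borel \<Otimes>\<^sub>M borel) (\<lambda>\<omega>. (X 0 \<omega>, Y 0 \<omega>))) (\<lambda>z. dist (fst z) (snd z))"
    using integrable_distr_eq[OF pm fm] by simp
  then have int: "integrable (muP \<Otimes>\<^sub>M muD) (\<lambda>z. dist (fst z) (snd z))" using joint by simp
  have "integral\<^sup>L (muP \<Otimes>\<^sub>M muD) (\<lambda>z. dist (fst z) (snd z)) = (\<integral>x. \<integral>y. dist x y \<partial>muD \<partial>muP)"
    using DP.integral_fst'[OF int] by simp
  also have "\<dots> = (\<integral>x. \<integral>y. \<phi>D y * dist x y \<partial>lborel \<partial>muP)"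
  proof (rule Bochner_Integration.integral_cong[OF refl])
    fix x
    show "(\<integral>y. dist x y \<partial>muD) = (\<integral>y. \<phi>D y * dist x y \<partial>lborel)"
      unfolding muD_def by (subst integral_density) (auto simp: D0 measurable_cong_sets[OF sets_lborel refl])
  qed
  also have "\<dots> = (\<integral>x. \<phi>P x * (\<integral>y. \<phi>D y * dist x y \<partial>lborel) \<partial>lborel)"
  proof -
    have gm: "(\<lambda>x. \<integral>y. \<phi>D y * dist x y \<partial>lborel) \<in> borel_measurable lborel"
    proof (rule sigma_finite_measure.borel_measurable_lebesgue_integral)
      show "sigma_finite_measure (lborel :: 'd measure)" by (rule lborel.sigma_finite_measure_axioms)
      show "(\<lambda>(x, y). \<phi>D y * dist x y) \<in> borel_measurable (lborel \<Otimes>\<^sub>M (lborel :: 'd measure))"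
        unfolding measurable_cong_sets[OF sets_pair_measure_cong[OF sets_lborel sets_lborel] refl] by measurable
    qed
    show ?thesis unfolding muP_def
      by (subst integral_density) (use gm in \<open>auto simp: P0 measurable_cong_sets[OF sets_lborel refl]\<close>)
  qed
  also have "\<dots> = (\<integral>x. \<integral>y. norm (y - x) * \<phi>P x * \<phi>D y \<partial>lborel \<partial>lborel)"
  proof (rule Bochner_Integration.integral_cong[OF refl])
    fix x
    have "(\<integral>y. norm (y - x) * \<phi>P x * \<phi>D y \<partial>lborel) = (\<integral>y. \<phi>P x * (\<phi>D y * dist x y) \<partial>lborel)"
      by (intro Bochner_Integration.integral_cong refl) (simp add: dist_norm norm_minus_commute mult_ac)
    also have "\<dots> = \<phi>P x * (\<integral>y. \<phi>D y * dist x y \<partial>lborel)" by (rule integral_mult_right_zero)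
    finally show "\<phi>P x * (\<integral>y. \<phi>D y * dist x y \<partial>lborel) = (\<integral>y. norm (y - x) * \<phi>P x * \<phi>D y \<partial>lborel)" by simp
  qed
  finally show ?thesis .
qed

end

context stacker
begin

lemma sum_measure_cells:
  assumes Ab: "\<And>j. A j \<in> sets borel" and C: "cells \<Omega> A m c \<delta>"
  shows "(\<Sum>j<m. measure muD (A j)) = 1" "(\<Sum>j<m. measure muP (A j)) = 1"
proof -
  interpret cells \<Omega> A m c \<delta> by (rule C)
  have U: "(\<Union>j<m. A j) = \<Omega>" using cover sub by blast
  have df: "disjoint_family_on A {..<m}" using disj by (auto simp: disjoint_family_on_def)
  interpret D: prob_space muD by (rule prob_muD)
  interpret PP: prob_space muP by (rule prob_muP)
  have "(\<Sum>j<m. measure muD (A j)) = measure muD (\<Union>j<m. A j)"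
    by (rule D.finite_measure_finite_Union[symmetric]) (use Ab df in auto)
  also have "\<dots> = measure muD (UNIV \<inter> \<Omega>)" using U by simp
  also have "\<dots> = 1" using muD_Omega[of UNIV] D.prob_space by simp
  finally show "(\<Sum>j<m. measure muD (A j)) = 1" .
  have "(\<Sum>j<m. measure muP (A j)) = measure muP (\<Union>j<m. A j)"
    by (rule PP.finite_measure_finite_Union[symmetric]) (use Ab df in auto)
  also have "\<dots> = measure muP (UNIV \<inter> \<Omega>)" using U by simp
  also have "\<dots> = 1" using muP_Omega[of UNIV] PP.prob_space by simp
  finally show "(\<Sum>j<m. measure muP (A j)) = 1" .
qed

lemma main_delta:
  assumes d: "\<delta> > 0"
  shows "AE \<omega> in M. ereal (integral\<^sup>L (muP \<Otimes>\<^sub>M muD) (\<lambda>z. dist (fst z) (snd z)) + wasserstein \<Omega> \<phi>D \<phi>P - 4 * \<delta>)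
     \<le> liminf (\<lambda>n. ereal (sc_opt (\<lambda>i. X i \<omega>) (\<lambda>i. Y i \<omega>) n / real n))"
proof -
  obtain m A c where Ab: "\<forall>j. A j \<in> sets borel" and C: "cells \<Omega> A m c \<delta>" and cm: "\<forall>j<m. c j \<in> \<Omega>"
    using partition_exists[OF cpt d] by blast
  interpret C: cells \<Omega> A m c \<delta> by (rule C)
  have Ab': "\<And>j. A j \<in> sets borel" using Ab by blast
  obtain B0 where B0: "\<forall>x\<in>\<Omega>. norm x \<le> B0" using compact_imp_bounded[OF cpt] unfolding bounded_iff by blast
  define B where "B = max B0 0"
  have Bn: "\<And>x. x \<in> \<Omega> \<Longrightarrow> norm x \<le> B" and B0': "B \<ge> 0" using B0 unfolding B_def by force+
  have dB: "dist x y \<le> 2 * B" if "x \<in> \<Omega>" "y \<in> \<Omega>" for x y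
    using Bn[OF that(1)] Bn[OF that(2)] norm_triangle_ineq4[of x y] by (simp add: dist_norm)
  define E where "E = integral\<^sup>L (muP \<Otimes>\<^sub>M muD) (\<lambda>z. dist (fst z) (snd z))"
  define W where "W = wasserstein \<Omega> \<phi>D \<phi>P"
  define a where "a j = measure muD (A j)" for j
  define b where "b k = measure muP (A k)" for k
  define L where "L = 2 * B + 2 * \<delta>"
  have a0: "\<And>j. 0 \<le> a j" unfolding a_def by simp
  have b0: "\<And>k. 0 \<le> b k" unfolding b_def by simp
  have suma: "(\<Sum>j<m. a j) = 1" unfolding a_def by (rule sum_measure_cells(1)[OF Ab' C])
  have sumb: "(\<Sum>k<m. b k) = 1" unfolding b_def by (rule sum_measure_cells(2)[OF Ab' C])
  have h1: "AE \<omega> in M. (\<lambda>n. (\<Sum>i<n. dist (X i \<omega>) (Y i \<omega>)) / real n) \<longlonglongrightarrow> E"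
  proof -
    have fm: "(\<lambda>z::'d\<times>'d. dist (fst z) (snd z)) \<in> borel_measurable (borel \<Otimes>\<^sub>M borel)" by measurable
    have ab: "-1 < 2 * B + 1" using B0' by simp
    have fb: "(\<lambda>z. dist (fst z) (snd z)) (x, y) \<in> {-1..2 * B + 1}" if "x \<in> \<Omega>" "y \<in> \<Omega>" for x y
      using dB[OF that] zero_le_dist[of x y] by (simp del: zero_le_dist)
    from slln_pair[OF fm ab fb] show ?thesis unfolding E_def by simp
  qed
  have h2: "AE \<omega> in M. \<forall>j. (\<lambda>n. (\<Sum>i<n. indicator (A j) (Y i \<omega>)) / real n) \<longlonglongrightarrow> a j"
    unfolding AE_all_countable
  proof
    fix j
    have fm: "(\<lambda>z::'d\<times>'d. indicator (A j) (snd z) :: real) \<in> borel_measurable (borel \<Otimes>\<^sub>M borel)"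
      using Ab' by measurable
    have ab: "-1 < (1::real)" by simp
    have fb: "(\<lambda>z. indicator (A j) (snd z) :: real) (x, y) \<in> {-1..1}" for x y
      by (simp add: indicator_def)
    from slln_pair[OF fm ab fb] show "AE \<omega> in M. (\<lambda>n. (\<Sum>i<n. indicator (A j) (Y i \<omega>)) / real n) \<longlonglongrightarrow> a j"
      unfolding a_def using int_snd[OF Ab'] by simp
  qed
  have h3: "AE \<omega> in M. \<forall>k. (\<lambda>n. (\<Sum>i<n. indicator (A k) (X i \<omega>)) / real n) \<longlonglongrightarrow> b k"
    unfolding AE_all_countable
  proof
    fix k
    have fm: "(\<lambda>z::'d\<times>'d. indicator (A k) (fst z) :: real) \<in> borel_measurable (borel \<Otimes>\<^sub>M borel)"
      using Ab' by measurable
    have ab: "-1 < (1::real)" by simp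
    have fb: "(\<lambda>z. indicator (A k) (fst z) :: real) (x, y) \<in> {-1..1}" for x y
      by (simp add: indicator_def)
    from slln_pair[OF fm ab fb] show "AE \<omega> in M. (\<lambda>n. (\<Sum>i<n. indicator (A k) (X i \<omega>)) / real n) \<longlonglongrightarrow> b k"
      unfolding b_def using int_fst[OF Ab'] by simp
  qed
  show ?thesis
    using h1 h2 h3 AE_space
  proof eventually_elim
    case (elim \<omega>)
    define x where "x i = X i \<omega>" for i
    define y where "y i = Y i \<omega>" for i
    have xO: "\<And>i. x i \<in> \<Omega>" unfolding x_def using XO elim(4) by blast
    have yO: "\<And>i. y i \<in> \<Omega>" unfolding y_def using YO elim(4) by blast
    define s1 where "s1 n = (\<Sum>i<n. dist (x i) (y i)) / real n" for n
    define al where "al j n = (\<Sum>i<n. indicator (A j) (y i)) / real n" for j n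
    define be where "be k n = (\<Sum>i<n. indicator (A k) (x i)) / real n" for k n
    define err where "err n = (\<Sum>j<m. \<bar>al j n - a j\<bar>) + (\<Sum>k<m. \<bar>be k n - b k\<bar>)" for n
    have s1c: "s1 \<longlonglongrightarrow> E" using elim(1) unfolding s1_def x_def y_def by simp
    have alc: "\<And>j. (\<lambda>n. al j n) \<longlonglongrightarrow> a j" using elim(2) unfolding al_def y_def by simp
    have bec: "\<And>k. (\<lambda>n. be k n) \<longlonglongrightarrow> b k" using elim(3) unfolding be_def x_def by simp
    have errc: "err \<longlonglongrightarrow> 0"
    proof -
      have 1: "(\<lambda>n. \<Sum>j<m. \<bar>al j n - a j\<bar>) \<longlonglongrightarrow> (\<Sum>j<m. \<bar>a j - a j\<bar>)"
        by (intro tendsto_sum tendsto_rabs tendsto_diff alc tendsto_const)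
      have 2: "(\<lambda>n. \<Sum>k<m. \<bar>be k n - b k\<bar>) \<longlonglongrightarrow> (\<Sum>k<m. \<bar>b k - b k\<bar>)"
        by (intro tendsto_sum tendsto_rabs tendsto_diff bec tendsto_const)
      show ?thesis using tendsto_add[OF 1 2] unfolding err_def by simp
    qed
    define lb where "lb n = s1 n + (W - 4 * \<delta>) - 2 * L * err n" for n
    have lbc: "lb \<longlonglongrightarrow> E + (W - 4 * \<delta>) - 2 * L * 0"
      unfolding lb_def[abs_def] by (intro tendsto_diff tendsto_add s1c tendsto_const tendsto_mult errc)
    have bound: "lb n \<le> sc_opt x y n / real n" if n: "n > 0" for n
    proof -
      have "real n * lb n \<le> sc_opt x y n"
        unfolding sc_opt_def
      proof (subst Min_ge_iff)
        show "finite (sc_tour_length x y n ` {\<sigma>. \<sigma> permutes {..<n}})"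
          by (intro finite_imageI finite_permutations) simp
        show "sc_tour_length x y n ` {\<sigma>. \<sigma> permutes {..<n}} \<noteq> {}" using permutes_id by blast
        show "\<forall>t\<in>sc_tour_length x y n ` {\<sigma>. \<sigma> permutes {..<n}}. real n * lb n \<le> t"
        proof
          fix t assume "t \<in> sc_tour_length x y n ` {\<sigma>. \<sigma> permutes {..<n}}"
          then obtain \<sigma> where \<sigma>: "\<sigma> permutes {..<n}" and t: "t = sc_tour_length x y n \<sigma>" by blast
          define Q where "Q = C.Qm x y n \<sigma>"
          have Q0: "\<And>j k. 0 \<le> Q j k" unfolding Q_def by (rule C.Qm_nonneg)
          have Qrows: "\<And>j. (\<Sum>k<m. Q j k) = al j n" unfolding Q_def al_def by (rule C.Qm_rows[OF n \<sigma> xO])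
          have Qcols: "\<And>k. (\<Sum>j<m. Q j k) = be k n" unfolding Q_def be_def by (rule C.Qm_cols[OF n \<sigma> yO])
          have Qtot: "(\<Sum>j<m. \<Sum>k<m. Q j k) = 1" unfolding Q_def by (rule C.Qm_total[OF n \<sigma> xO yO])
          obtain P where P0: "\<forall>j k. 0 \<le> P j k" and Prows: "\<forall>j<m. (\<Sum>k<m. P j k) = a j"
            and Pcols: "\<forall>k<m. (\<Sum>j<m. P j k) = b k"
            and Perr: "(\<Sum>j<m. \<Sum>k<m. \<bar>P j k - Q j k\<bar>) \<le>
               2 * ((\<Sum>j<m. \<bar>(\<Sum>k<m. Q j k) - a j\<bar>) + (\<Sum>k<m. \<bar>(\<Sum>j<m. Q j k) - b k\<bar>))"
            using transport_perturb[OF Q0 a0 b0 suma sumb Qtot] by blast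
          have Perr': "(\<Sum>j<m. \<Sum>k<m. \<bar>P j k - Q j k\<bar>) \<le> 2 * err n"
            using Perr unfolding Qrows Qcols err_def .
          have Wle: "W \<le> (\<Sum>j<m. \<Sum>k<m. P j k * (dist (c j) (c k) + 2 * \<delta>))"
            unfolding W_def
          proof (rule W_le[of A m P])
            show "\<And>j. A j \<in> sets borel" by (rule Ab')
            show "\<And>j k. j \<noteq> k \<Longrightarrow> A j \<inter> A k = {}" by (rule C.disj)
            show "\<And>j. A j \<subseteq> \<Omega>" by (rule C.sub)
            show "\<Omega> \<subseteq> (\<Union>j<m. A j)" by (rule C.cover)
            show "\<And>j k. 0 \<le> P j k" using P0 by blast
            show "\<And>j. j < m \<Longrightarrow> (\<Sum>k<m. P j k) = measure muD (A j)" using Prows unfolding a_def by blast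
            show "\<And>k. k < m \<Longrightarrow> (\<Sum>j<m. P j k) = measure muP (A k)" using Pcols unfolding b_def by blast
            show "\<And>j k x y. y \<in> A j \<Longrightarrow> x \<in> A k \<Longrightarrow> dist x y \<le> dist (c j) (c k) + 2 * \<delta>"
              using C.dist_ub by (metis dist_commute)
          qed
          have sumP: "(\<Sum>j<m. \<Sum>k<m. P j k) = 1" using Prows suma by simp
          have Pl: "(\<Sum>j<m. \<Sum>k<m. P j k * (dist (c j) (c k) - 2 * \<delta>))
              = (\<Sum>j<m. \<Sum>k<m. P j k * (dist (c j) (c k) + 2 * \<delta>)) - 4 * \<delta>"
          proof -
            have "(\<Sum>j<m. \<Sum>k<m. P j k * (dist (c j) (c k) - 2 * \<delta>))
                = (\<Sum>j<m. \<Sum>k<m. P j k * (dist (c j) (c k) + 2 * \<delta>) - 4 * \<delta> * P j k)"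
              by (intro sum.cong refl) (simp add: algebra_simps)
            also have "\<dots> = (\<Sum>j<m. \<Sum>k<m. P j k * (dist (c j) (c k) + 2 * \<delta>)) - 4 * \<delta> * (\<Sum>j<m. \<Sum>k<m. P j k)"
              by (simp add: sum_subtractf sum_distrib_left)
            finally show ?thesis using sumP by simp
          qed
          have lL: "\<bar>dist (c j) (c k) - 2 * \<delta>\<bar> \<le> L" if "j < m" "k < m" for j k
            using dB[of "c j" "c k"] cm that d zero_le_dist[of "c j" "c k"] B0' unfolding L_def by (auto simp: abs_le_iff simp del: zero_le_dist)
          have QPb: "(\<Sum>j<m. \<Sum>k<m. P j k * (dist (c j) (c k) - 2 * \<delta>)) - L * (\<Sum>j<m. \<Sum>k<m. \<bar>P j k - Q j k\<bar>)
              \<le> (\<Sum>j<m. \<Sum>k<m. Q j k * (dist (c j) (c k) - 2 * \<delta>))"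
            by (rule QP_bound) (rule lL)
          have L0: "L \<ge> 0" unfolding L_def using B0' d by simp
          have key: "W - 4 * \<delta> - 2 * L * err n \<le> (\<Sum>j<m. \<Sum>k<m. Q j k * (dist (c j) (c k) - 2 * \<delta>))"
          proof -
            have "L * (\<Sum>j<m. \<Sum>k<m. \<bar>P j k - Q j k\<bar>) \<le> L * (2 * err n)"
              by (rule mult_left_mono[OF Perr' L0])
            then show ?thesis using QPb Pl Wle by linarith
          qed
          have tl: "(\<Sum>i<n. dist (x i) (y i)) + real n * (\<Sum>j<m. \<Sum>k<m. Q j k * (dist (c j) (c k) - 2 * \<delta>)) \<le> t"
            unfolding t Q_def by (rule C.tour_lb[OF n \<sigma> xO yO])
          have "real n * lb n = (\<Sum>i<n. dist (x i) (y i)) + real n * (W - 4 * \<delta> - 2 * L * err n)"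
            unfolding lb_def s1_def using n by (simp add: algebra_simps)
          also have "\<dots> \<le> (\<Sum>i<n. dist (x i) (y i)) + real n * (\<Sum>j<m. \<Sum>k<m. Q j k * (dist (c j) (c k) - 2 * \<delta>))"
            using key by (intro add_left_mono mult_left_mono) auto
          also have "\<dots> \<le> t" by (rule tl)
          finally show "real n * lb n \<le> t" .
        qed
      qed
      then show ?thesis using n by (simp add: field_simps)
    qed
    have lbc': "lb \<longlonglongrightarrow> E + (W - 4 * \<delta>)" using lbc by simp
    have "liminf (\<lambda>n. ereal (lb n)) = ereal (E + (W - 4 * \<delta>))"
    proof (rule lim_imp_Liminf)
      show "(sequentially :: nat filter) \<noteq> bot" by simp
      show "(\<lambda>n. ereal (lb n)) \<longlonglongrightarrow> ereal (E + (W - 4 * \<delta>))" by (rule tendsto_ereal[OF lbc'])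
    qed
    moreover have "liminf (\<lambda>n. ereal (lb n)) \<le> liminf (\<lambda>n. ereal (sc_opt x y n / real n))"
    proof (rule Liminf_mono)
      show "eventually (\<lambda>n. ereal (lb n) \<le> ereal (sc_opt x y n / real n)) sequentially"
        using eventually_gt_at_top[of 0] by eventually_elim (simp add: bound)
    qed
    ultimately have "ereal (E + (W - 4 * \<delta>)) \<le> liminf (\<lambda>n. ereal (sc_opt x y n / real n))" by simp
    moreover have "E + (W - 4 * \<delta>) = E + W - 4 * \<delta>" by simp
    ultimately have "ereal (E + W - 4 * \<delta>) \<le> liminf (\<lambda>n. ereal (sc_opt x y n / real n))" by metis
    moreover have "x = (\<lambda>i. X i \<omega>)" "y = (\<lambda>i. Y i \<omega>)" unfolding x_def y_def by auto
    ultimately show ?case unfolding E_def W_def by simp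
  qed
qed

end

theorem theorem2:
  fixes M :: "'m measure"
    and \<Omega> :: "'d::euclidean_space set"
    and X Y :: "nat \<Rightarrow> 'm \<Rightarrow> 'd"
    and \<phi>P \<phi>D :: "'d \<Rightarrow> real"
  assumes "prob_space M"
    and "DIM('d) \<ge> 2"
    and "compact \<Omega>"
    and "\<And>x. 0 \<le> \<phi>P x" and "\<And>x. 0 \<le> \<phi>D x"
    and "\<And>i. distributed M lborel (X i) (\<lambda>x. ennreal (\<phi>P x))"
    and "\<And>i. distributed M lborel (Y i) (\<lambda>x. ennreal (\<phi>D x))"
    and "\<And>i \<omega>. \<omega> \<in> space M \<Longrightarrow> X i \<omega> \<in> \<Omega>"
    and "\<And>i \<omega>. \<omega> \<in> space M \<Longrightarrow> Y i \<omega> \<in> \<Omega>"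
    and "prob_space.indep_vars M (\<lambda>_. borel)
           (\<lambda>j. case j of Inl i \<Rightarrow> X i | Inr i \<Rightarrow> Y i) UNIV"
  shows "AE \<omega> in M.
           liminf (\<lambda>n. ereal (sc_opt (\<lambda>i. X i \<omega>) (\<lambda>i. Y i \<omega>) n / real n))
             \<ge> ereal ((\<integral>x. \<integral>y. norm (y - x) * \<phi>P x * \<phi>D y \<partial>lborel \<partial>lborel)
                      + wasserstein \<Omega> \<phi>D \<phi>P)"
proof -
  have st: "stacker M \<Omega> X Y \<phi>P \<phi>D"
    unfolding stacker_def stacker_axioms_def using assms by auto
  interpret S: stacker M \<Omega> X Y \<phi>P \<phi>D by (rule st)
  define C where "C = (\<integral>x. \<integral>y. norm (y - x) * \<phi>P x * \<phi>D y \<partial>lborel \<partial>lborel) + wasserstein \<Omega> \<phi>D \<phi>P"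
  have Cdef: "C = integral\<^sup>L (S.muP \<Otimes>\<^sub>M S.muD) (\<lambda>z. dist (fst z) (snd z)) + wasserstein \<Omega> \<phi>D \<phi>P"
    unfolding C_def using S.E_formula by simp
  have "AE \<omega> in M. \<forall>r::nat. ereal (C - 4 * inverse (real (Suc r)))
          \<le> liminf (\<lambda>n. ereal (sc_opt (\<lambda>i. X i \<omega>) (\<lambda>i. Y i \<omega>) n / real n))"
    unfolding AE_all_countable
  proof
    fix r :: nat
    have "inverse (real (Suc r)) > 0" by simp
    from S.main_delta[OF this]
    show "AE \<omega> in M. ereal (C - 4 * inverse (real (Suc r)))
          \<le> liminf (\<lambda>n. ereal (sc_opt (\<lambda>i. X i \<omega>) (\<lambda>i. Y i \<omega>) n / real n))"
      unfolding Cdef by simp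
  qed
  then show ?thesis
  proof (rule AE_mp, intro AE_I2 impI)
    fix \<omega> assume all: "\<forall>r::nat. ereal (C - 4 * inverse (real (Suc r)))
          \<le> liminf (\<lambda>n. ereal (sc_opt (\<lambda>i. X i \<omega>) (\<lambda>i. Y i \<omega>) n / real n))"
    have lim: "(\<lambda>r. ereal (C - 4 * inverse (real (Suc r)))) \<longlonglongrightarrow> ereal (C - 4 * 0)"
      by (intro tendsto_ereal tendsto_diff tendsto_const tendsto_mult LIMSEQ_inverse_real_of_nat)
    have "ereal (C - 4 * 0) \<le> liminf (\<lambda>n. ereal (sc_opt (\<lambda>i. X i \<omega>) (\<lambda>i. Y i \<omega>) n / real n))"
      by (rule LIMSEQ_le_const2[OF lim]) (use all in blast)
    then show "liminf (\<lambda>n. ereal (sc_opt (\<lambda>i. X i \<omega>) (\<lambda>i. Y i \<omega>) n / real n))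
             \<ge> ereal ((\<integral>x. \<integral>y. norm (y - x) * \<phi>P x * \<phi>D y \<partial>lborel \<partial>lborel)
                      + wasserstein \<Omega> \<phi>D \<phi>P)"
      unfolding C_def by simp
  qed
qed

end
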